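(* (a) Suppose $a'>a\ge0$, $b>c>0$ and $\delta>0$. Then the function \[ x\mapsto {}_2F_1(a+\delta,b;c;x)\,{}_2F_1(a',b;c;x)-{}_2F_1(a'+\delta,b;c;x)\,{}_2F_1(a,b;c;x) \] has positive power series coefficients, starting with the coefficient at $x^2$. (b) Let $\delta>0$. The function $a\mapsto{}_2F_1(a,b;c;x)$ is log-concave, i.e. ${}_2F_1(a+\delta,b;c;x)^2\ge {}_2F_1(a,b;c;x)\,{}_2F_1(a+2\delta,b;c;x)$, on $[0,\infty)$ when $0<x<1$, $b>c>0$, and when $x<0$, $c>0>b$; and on $(-\infty,c]$ when $0<x<1$, $c>0>b$, and when $x<0$, $b>c>0$. (c) Let $\delta>0$. For $0<x<1$: \[ \frac{\Gamma(a+\delta)\Gamma(a')}{\Gamma(a)\Gamma(a'+\delta)}<\frac{{}_2F_1(a'+\delta,b;c;x)\,{}_2F_1(a,b;c;x)}{{}_2F_1(a+\delta,b;c;x)\,{}_2F_1(a',b;c;x)}<1 \qquad (\ast) \] holds if $b>c>0$, $a'>a>0$, and \[ \frac{\Gamma(c-a-\delta)\Gamma(c-a')}{\Gamma(c-a)\Gamma(c-a'-\delta)}<\frac{{}_2F_1(a'+\delta,b;c;x)\,{}_2F_1(a,b;c;x)}{{}_2F_1(a+\delta,b;c;x)\,{}_2F_1(a',b;c;x)}<1 \qquad (\ast\ast) \] holds if $c>0>b$, $c-\delta>a'>a$. Further, for $x<0$, $(\ast)$ holds if $c>0>b$, $a'>a>0$, and $(\ast\ast)$ holds if $b>c>0$,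 $c-\delta>a'>a$.
   Context: $(a)_k=a(a+1)\cdots(a+k-1)$ is the Pochhammer symbol; the Gauss hypergeometric function is ${}_2F_1(a,b;c;x)=\sum_{k\ge0}\frac{(a)_k(b)_k}{(c)_k k!}x^k$ (for $x<0$ understood via analytic continuation, e.g. Pfaff's transformation). $\Gamma$ is Euler's gamma function. *)

theory Defs
  imports "HOL-Analysis.Analysis"
begin

definition hg_coef :: "real \<Rightarrow> real \<Rightarrow> real \<Rightarrow> nat \<Rightarrow> real" where
  "hg_coef a b c k = pochhammer a k * pochhammer b k / (pochhammer c k * fact k)"

text \<open>For x > -1 it is the power series (convergent for |x| < 1); for x \<le> -1 it is
  the analytic continuation given by Pfaff's transformation
  2F1(a,b;c;x) = (1-x)^(-b) 2F1(c-a,b;c;x/(x-1)), where x/(x-1) \<in> [1/2,1).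
  (Values for x \<ge> 1 are irrelevant and never used.)\<close>
definition hyp2f1 :: "real \<Rightarrow> real \<Rightarrow> real \<Rightarrow> real \<Rightarrow> real" where
  "hyp2f1 a b c x =
     (if x \<le> -1 then (1 - x) powr (-b) * (\<Sum>k. hg_coef (c - a) b c k * (x / (x - 1)) ^ k)
      else (\<Sum>k. hg_coef a b c k * x ^ k))"

end

theory Submission
  imports Defs "HOL-Computational_Algebra.Formal_Power_Series" "HOL-Real_Asymp.Real_Asymp"
begin

definition Sr :: "real \<Rightarrow> real \<Rightarrow> real \<Rightarrow> real \<Rightarrow> real" where
  "Sr a b c x = (\<Sum>k. hg_coef a b c k * x ^ k)"

lemma pochhammer_pos_real: "(c::real) > 0 \<Longrightarrow> pochhammer c k > 0"
  by (simp add: pochhammer_pos)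

lemma hg_coef_Suc:
  assumes "c > 0"
  shows "hg_coef a b c (Suc k) = hg_coef a b c k * ((a + k) * (b + k) / ((c + k) * (k + 1)))"
proof -
  have "pochhammer c k > 0" using assms by (rule pochhammer_pos_real)
  moreover have "c + k > 0" using assms by simp
  ultimately show ?thesis
    unfolding hg_coef_def by (simp add: pochhammer_rec' field_simps)
qed

lemma hg_coef_0 [simp]: "hg_coef a b c 0 = 1"
  by (simp add: hg_coef_def)

lemma hg_ratio_lim:
  "((\<lambda>k::nat. (a + real k) * (b + real k) / ((c + real k) * (real k + 1))) \<longlongrightarrow> 1) at_top"
  by real_asymp

lemma hg_summable_abs:
  assumes "c > 0" "\<bar>x\<bar> < 1"
  shows "summable (\<lambda>k. \<bar>hg_coef a b c k * x ^ k\<bar>)"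
proof -
  define q where "q = (1 + \<bar>x\<bar>) / 2"
  have q1: "q < 1" using assms by (simp add: q_def)
  have lim: "((\<lambda>k::nat. \<bar>(a + real k) * (b + real k) / ((c + real k) * (real k + 1))\<bar> * \<bar>x\<bar>) \<longlongrightarrow> 1 * \<bar>x\<bar>) at_top"
    by (intro tendsto_intros hg_ratio_lim[THEN tendsto_rabs[where l=1, simplified]])
  have "\<bar>x\<bar> < q" using assms by (simp add: q_def)
  hence "eventually (\<lambda>k. \<bar>(a + real k) * (b + real k) / ((c + real k) * (real k + 1))\<bar> * \<bar>x\<bar> < q) at_top"
    using order_tendstoD(2)[OF lim] by simp
  then obtain N where N: "\<And>k. k \<ge> N \<Longrightarrow> \<bar>(a + real k) * (b + real k) / ((c + real k) * (real k + 1))\<bar> * \<bar>x\<bar> < q"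
    by (auto simp: eventually_at_top_linorder)
  show ?thesis
  proof (rule summable_ratio_test[OF q1, of N])
    fix k assume "N \<le> k"
    hence Nk: "\<bar>(a + real k) * (b + real k) / ((c + real k) * (real k + 1))\<bar> * \<bar>x\<bar> \<le> q"
      using N[of k] by simp
    have "norm \<bar>hg_coef a b c (Suc k) * x ^ Suc k\<bar>
        = \<bar>hg_coef a b c k * x ^ k\<bar> * (\<bar>(a + real k) * (b + real k) / ((c + real k) * (real k + 1))\<bar> * \<bar>x\<bar>)"
      by (simp only: hg_coef_Suc[OF assms(1)] abs_mult abs_divide power_Suc) (simp add: mult_ac)
    also have "\<dots> \<le> \<bar>hg_coef a b c k * x ^ k\<bar> * q"
      by (intro mult_left_mono Nk) simp
    finally show "norm \<bar>hg_coef a b c (Suc k) * x ^ Suc k\<bar> \<le> q * norm \<bar>hg_coef a b c k * x ^ k\<bar>"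
      by (simp add: mult.commute)
  qed
qed

lemma hg_sums:
  assumes "c > 0" "\<bar>x\<bar> < 1"
  shows "(\<lambda>k. hg_coef a b c k * x ^ k) sums Sr a b c x"
  unfolding Sr_def using summable_rabs_cancel[OF hg_summable_abs[OF assms]]
  by (simp add: summable_sums)

lemma hyp2f1_series: "x > -1 \<Longrightarrow> hyp2f1 a b c x = Sr a b c x"
  by (simp add: hyp2f1_def Sr_def)

lemma hyp2f1_le_m1: "x \<le> -1 \<Longrightarrow> hyp2f1 a b c x = (1 - x) powr (-b) * Sr (c - a) b c (x / (x - 1))"
  by (simp add: hyp2f1_def Sr_def)

lemma hg_coef_sym: "hg_coef a b c k = hg_coef b a c k"
  by (simp add: hg_coef_def mult.commute)

lemma Sr_sym: "Sr a b c x = Sr b a c x"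
  by (simp add: Sr_def hg_coef_sym)

lemma poch_vandermonde:
  fixes s t :: real
  shows "(\<Sum>k\<le>n. of_nat (n choose k) * pochhammer s k * pochhammer t (n - k)) = pochhammer (s + t) n"
proof -
  have V: "(\<Sum>k=0..n. ((-s) gchoose k) * ((-t) gchoose (n - k))) = (-s + -t) gchoose n"
    by (rule gbinomial_Vandermonde)
  have hterm: "((-s) gchoose k) * ((-t) gchoose (n - k)) =
     (-1)^n / fact n * (of_nat (n choose k) * pochhammer s k * pochhammer t (n - k))" if "k \<le> n" for k
  proof -
    have "((-s) gchoose k) * ((-t) gchoose (n - k)) =
        ((-1)^k * (-1)^(n-k)) * (pochhammer s k * pochhammer t (n - k)) / (fact k * fact (n - k))"
      by (simp add: gbinomial_pochhammer)
    also have "(-1::real)^k * (-1)^(n-k) = (-1)^n"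
      using that by (simp flip: power_add)
    also have "fact k * fact (n - k) = (fact n :: real) / of_nat (n choose k)"
      using that by (simp add: binomial_fact field_simps)
    finally show ?thesis using that by (simp add: field_simps)
  qed
  have "(\<Sum>k=0..n. ((-s) gchoose k) * ((-t) gchoose (n - k))) =
      (-1)^n / fact n * (\<Sum>k\<le>n. of_nat (n choose k) * pochhammer s k * pochhammer t (n - k))"
    by (simp add: hterm sum_distrib_left atMost_atLeast0)
  moreover have "(-s + -t) gchoose n = (-1)^n / fact n * pochhammer (s + t) n"
    by (simp add: gbinomial_pochhammer ac_simps)
  ultimately show ?thesis using V by (simp add: field_simps)
qed


lemma sum_rev_atMost: "(\<Sum>k\<le>(n::nat). g (n - k)) = (\<Sum>k\<le>n. (g k :: real))"
  by (rule sum.reindex_bij_witness[where i="\<lambda>k. n - k" and j="\<lambda>k. n - k"]) auto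

lemma poch_nonneg: "(z::real) \<ge> 0 \<Longrightarrow> pochhammer z k \<ge> 0"
  by (simp add: pochhammer_prod prod_nonneg)

lemma poch_pos: "(z::real) > 0 \<Longrightarrow> pochhammer z k > 0"
  by (simp add: pochhammer_pos)

lemma poch_mono: "0 \<le> (u::real) \<Longrightarrow> u \<le> v \<Longrightarrow> pochhammer u k \<le> pochhammer v k"
  unfolding pochhammer_prod by (intro prod_mono) auto

lemma poch_pair_mono:
  fixes s1 t1 s2 t2 :: real
  assumes "s1 + t1 = s2 + t2" "s2 * t2 \<le> s1 * t1" "0 \<le> s2" "0 \<le> t2"
  shows "pochhammer s2 k * pochhammer t2 k \<le> pochhammer s1 k * pochhammer t1 k"
proof -
  have "pochhammer s2 k * pochhammer t2 k = (\<Prod>i = 0..<k. (s2 + i) * (t2 + i))"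
    by (simp add: pochhammer_prod prod.distrib)
  also have "\<dots> \<le> (\<Prod>i = 0..<k. (s1 + i) * (t1 + i))"
  proof (intro prod_mono conjI)
    fix i assume "i \<in> {0..<k}"
    show "0 \<le> (s2 + i) * (t2 + i)" using assms by simp
    have "(s1 + i) * (t1 + i) = s1 * t1 + i * (s1 + t1) + i * i" by (simp add: algebra_simps)
    moreover have "(s2 + i) * (t2 + i) = s2 * t2 + i * (s2 + t2) + i * i" by (simp add: algebra_simps)
    ultimately show "(s2 + i) * (t2 + i) \<le> (s1 + i) * (t1 + i)" using assms by simp
  qed
  also have "\<dots> = pochhammer s1 k * pochhammer t1 k"
    by (simp add: pochhammer_prod prod.distrib)
  finally show ?thesis .
qed

lemma prod_strict_mono_aux:
  fixes p q :: "nat \<Rightarrow> real"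
  assumes "\<And>i. 0 \<le> q i" "\<And>i. q i < p i"
  shows "k \<ge> 1 \<Longrightarrow> (\<Prod>i<k. q i) < (\<Prod>i<k. p i)"
proof (induction k)
  case 0 thus ?case by simp
next
  case (Suc k)
  show ?case
  proof (cases "k = 0")
    case True thus ?thesis using assms by simp
  next
    case False
    hence IH: "(\<Prod>i<k. q i) < (\<Prod>i<k. p i)" using Suc by simp
    have q0: "0 \<le> (\<Prod>i<k. q i)" using assms by (simp add: prod_nonneg)
    have "(\<Prod>i<Suc k. q i) = q k * (\<Prod>i<k. q i)" by simp
    also have "\<dots> \<le> q k * (\<Prod>i<k. p i)" using IH assms(1)[of k] by (intro mult_left_mono) auto
    also have "\<dots> < p k * (\<Prod>i<k. p i)"
      using assms(2)[of k] IH q0 by (intro mult_strict_right_mono) auto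
    finally show ?thesis by (simp add: mult.commute)
  qed
qed

lemma poch_pair_strict:
  fixes s1 t1 s2 t2 :: real
  assumes "s1 + t1 = s2 + t2" "s2 * t2 < s1 * t1" "0 \<le> s2" "0 \<le> t2" "k \<ge> 1"
  shows "pochhammer s2 k * pochhammer t2 k < pochhammer s1 k * pochhammer t1 k"
proof -
  have e: "pochhammer s k * pochhammer t k = (\<Prod>i<k. (s + i) * (t + i))" for s t :: real
    by (simp add: pochhammer_prod prod.distrib atLeast0LessThan)
  have "(\<Prod>i<k. (s2 + i) * (t2 + i)) < (\<Prod>i<k. (s1 + i) * (t1 + i))"
  proof (rule prod_strict_mono_aux[OF _ _ assms(5)])
    fix i :: nat
    show "0 \<le> (s2 + i) * (t2 + i)" using assms by simp
    have "(s1 + i) * (t1 + i) = s1 * t1 + i * (s1 + t1) + i * i" by (simp add: algebra_simps)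
    moreover have "(s2 + i) * (t2 + i) = s2 * t2 + i * (s2 + t2) + i * i" by (simp add: algebra_simps)
    ultimately show "(s2 + i) * (t2 + i) < (s1 + i) * (t1 + i)" using assms by simp
  qed
  thus ?thesis by (simp add: e)
qed

lemma bracket_ineq:
  fixes s1 t1 s2 t2 mu X1 Y1 X2 Y2 :: real
  assumes sum: "s1 + t1 = s2 + t2" and ord: "s2 \<ge> s1" "s1 \<ge> t1" "t1 \<ge> t2" "t2 \<ge> 0"
    and mu: "mu \<ge> 0"
    and XY: "Y2 \<ge> 0" "X2 \<ge> Y2" "Y1 \<ge> 0" "X1 \<ge> Y1" "X2 * Y1 \<ge> X1 * Y2"
  shows "(s1 * (s1 + mu) * X1 + t1 * (t1 + mu) * Y1) * (s2 * t2 * (X2 + Y2))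
       \<le> s1 * t1 * (X1 + Y1) * (s2 * (s2 + mu) * X2 + t2 * (t2 + mu) * Y2)"
proof -
  define A1 where "A1 = s1 * (s1 + mu)"
  define B1 where "B1 = t1 * (t1 + mu)"
  define A2 where "A2 = s2 * (s2 + mu)"
  define B2 where "B2 = t2 * (t2 + mu)"
  define P1 where "P1 = s1 * t1"
  define P2 where "P2 = s2 * t2"
  have P2nn: "P2 \<ge> 0" using ord unfolding P2_def by simp
  have PP: "P2 \<le> P1"
  proof -
    have "P1 - P2 = (s2 - s1) * (s1 - t2)"
    proof -
      have t1e: "t1 = s2 + t2 - s1" using sum by simp
      show ?thesis unfolding P1_def P2_def by (simp only: t1e) (simp add: algebra_simps)
    qed
    moreover have "(s2 - s1) * (s1 - t2) \<ge> 0" using ord by simp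
    ultimately show ?thesis by simp
  qed
  have AB1: "A1 \<ge> B1" unfolding A1_def B1_def using ord mu
    by (intro mult_mono) auto
  have step1: "(A1 * X1 + B1 * Y1) * (X2 + Y2) \<le> (A1 * X2 + B1 * Y2) * (X1 + Y1)"
  proof -
    have "(A1 * X2 + B1 * Y2) * (X1 + Y1) - (A1 * X1 + B1 * Y1) * (X2 + Y2) = (A1 - B1) * (X2 * Y1 - X1 * Y2)"
      by (simp add: algebra_simps)
    moreover have "(A1 - B1) * (X2 * Y1 - X1 * Y2) \<ge> 0" using AB1 XY by simp
    ultimately show ?thesis by simp
  qed
  have d1: "P1 * A2 - P2 * A1 \<ge> 0"
  proof -
    have "P1 * A2 - P2 * A1 = s1 * s2 * ((t1 - t2) * (s2 + mu) + t2 * (s2 - s1))"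
      unfolding P1_def P2_def A1_def A2_def by (simp add: algebra_simps)
    moreover have "(t1 - t2) * (s2 + mu) + t2 * (s2 - s1) \<ge> 0" using ord mu by simp
    moreover have "s1 * s2 \<ge> 0" using ord by simp
    ultimately show ?thesis by simp
  qed
  have d12: "(P1 * A2 - P2 * A1) + (P1 * B2 - P2 * B1) \<ge> 0"
  proof -
    define K where "K = (s2 + t2) * (s2 + t2) + mu * (s2 + t2)"
    have a1: "A1 + B1 = K - 2 * P1"
    proof -
      have t1e: "t1 = s2 + t2 - s1" using sum by simp
      show ?thesis unfolding A1_def B1_def P1_def K_def by (simp only: t1e) (simp add: algebra_simps)
    qed
    have a2: "A2 + B2 = K - 2 * P2" unfolding A2_def B2_def P2_def K_def by (simp add: algebra_simps)
    have "(P1 * A2 - P2 * A1) + (P1 * B2 - P2 * B1) = P1 * (A2 + B2) - P2 * (A1 + B1)"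
      by (simp add: algebra_simps)
    also have "\<dots> = K * (P1 - P2)" by (simp add: a1 a2 algebra_simps)
    finally show ?thesis using PP mu ord unfolding K_def by simp
  qed
  have step2: "P2 * (A1 * X2 + B1 * Y2) \<le> P1 * (A2 * X2 + B2 * Y2)"
  proof -
    have "P1 * (A2 * X2 + B2 * Y2) - P2 * (A1 * X2 + B1 * Y2)
        = X2 * (P1 * A2 - P2 * A1) + Y2 * (P1 * B2 - P2 * B1)" by (simp add: algebra_simps)
    also have "\<dots> \<ge> Y2 * (P1 * A2 - P2 * A1) + Y2 * (P1 * B2 - P2 * B1)"
      using d1 XY by (intro add_right_mono mult_right_mono) auto
    also have "Y2 * (P1 * A2 - P2 * A1) + Y2 * (P1 * B2 - P2 * B1) \<ge> 0"
      using d12 XY by (simp add: distrib_left[symmetric])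
    finally show ?thesis by simp
  qed
  have "(A1 * X1 + B1 * Y1) * (P2 * (X2 + Y2)) = P2 * ((A1 * X1 + B1 * Y1) * (X2 + Y2))" by simp
  also have "\<dots> \<le> P2 * ((A1 * X2 + B1 * Y2) * (X1 + Y1))" using step1 P2nn by (rule mult_left_mono)
  also have "\<dots> = (X1 + Y1) * (P2 * (A1 * X2 + B1 * Y2))" by simp
  also have "\<dots> \<le> (X1 + Y1) * (P1 * (A2 * X2 + B2 * Y2))" using step2 XY by (intro mult_left_mono) auto
  also have "\<dots> = P1 * (X1 + Y1) * (A2 * X2 + B2 * Y2)" by simp
  finally show ?thesis unfolding A1_def B1_def A2_def B2_def P1_def P2_def by (simp add: mult.assoc)
qed


definition Hf :: "real \<Rightarrow> real \<Rightarrow> nat \<Rightarrow> nat \<Rightarrow> real" where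
  "Hf s t n k = pochhammer s k * pochhammer t (n - k) + pochhammer s (n - k) * pochhammer t k"

lemma Hf_swap: "Hf s t n k = Hf t s n k"
  by (simp add: Hf_def mult.commute add.commute)

lemma Hf_rev: "k \<le> n \<Longrightarrow> Hf s t n (n - k) = Hf s t n k"
  by (simp add: Hf_def add.commute)

lemma pA: "pochhammer (z::real) (k + Suc (Suc r)) =
   pochhammer z k * ((z + k) * (z + k + (r + 1)) * pochhammer (z + k + 1) r)"
proof -
  have "pochhammer z (k + Suc (Suc r)) = pochhammer z k * pochhammer (z + k) (Suc (Suc r))"
    by (rule pochhammer_product')
  also have "pochhammer (z + k) (Suc (Suc r)) = (z + k) * pochhammer (z + k + 1) (Suc r)"
    by (rule pochhammer_rec)
  also have "pochhammer (z + k + 1) (Suc r) = (z + k + 1 + r) * pochhammer (z + k + 1) r"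
    by (rule pochhammer_rec')
  finally show ?thesis by (simp add: algebra_simps)
qed
lemma pB: "pochhammer (z::real) (k + Suc r) = pochhammer z k * ((z + k) * pochhammer (z + k + 1) r)"
proof -
  have "pochhammer z (k + Suc r) = pochhammer z k * pochhammer (z + k) (Suc r)"
    by (rule pochhammer_product')
  also have "pochhammer (z + k) (Suc r) = (z + k) * pochhammer (z + k + 1) r"
    by (rule pochhammer_rec)
  finally show ?thesis by simp
qed

lemma Hf_fact1:
  assumes "n = 2 * k + r + 2"
  shows "Hf s t n k = pochhammer s k * pochhammer t k *
     ((s + k) * (s + k + (r + 1)) * pochhammer (s + k + 1) r + (t + k) * (t + k + (r + 1)) * pochhammer (t + k + 1) r)"
proof -
  have "n - k = k + Suc (Suc r)" using assms by simp
  thus ?thesis unfolding Hf_def by (simp only: pA) (simp add: algebra_simps)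
qed

lemma Hf_fact2:
  assumes "n = 2 * k + r + 2"
  shows "Hf s t n (Suc k) = pochhammer s k * pochhammer t k *
     ((s + k) * (t + k) * (pochhammer (s + k + 1) r + pochhammer (t + k + 1) r))"
proof -
  have "n - Suc k = k + Suc r" using assms by simp
  thus ?thesis unfolding Hf_def by (simp only: pB pochhammer_Suc) (simp add: algebra_simps)
qed


lemma poch_cross:
  fixes s1 t1 s2 t2 :: real
  assumes "s2 - s1 = t1 - t2" "s1 \<le> s2" "0 \<le> s1" "0 \<le> t2"
  shows "pochhammer (s1 + 1) r * pochhammer (t2 + 1) r \<le> pochhammer (s2 + 1) r * pochhammer (t1 + 1) r"
proof -
  have "pochhammer (s1 + 1) r * pochhammer (t2 + 1) r = (\<Prod>i = 0..<r. (s1 + 1 + i) * (t2 + 1 + i))"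
    by (simp add: pochhammer_prod prod.distrib)
  also have "\<dots> \<le> (\<Prod>i = 0..<r. (s2 + 1 + i) * (t1 + 1 + i))"
  proof (intro prod_mono conjI)
    fix i assume "i \<in> {0..<r}"
    show "0 \<le> (s1 + 1 + i) * (t2 + 1 + i)" using assms by simp
    define d where "d = s2 - s1"
    have s2e: "s2 = s1 + d" and t1e: "t1 = t2 + d" using assms by (simp_all add: d_def)
    have d0: "d \<ge> 0" using assms by (simp add: d_def)
    have "(s2 + 1 + i) * (t1 + 1 + i) - (s1 + 1 + i) * (t2 + 1 + i) = d * (s1 + 1 + i) + d * (t2 + 1 + i) + d * d"
      unfolding s2e t1e by (simp add: algebra_simps)
    moreover have "d * (s1 + 1 + i) + d * (t2 + 1 + i) + d * d \<ge> 0" using d0 assms by simp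
    ultimately show "(s1 + 1 + i) * (t2 + 1 + i) \<le> (s2 + 1 + i) * (t1 + 1 + i)" by simp
  qed
  also have "\<dots> = pochhammer (s2 + 1) r * pochhammer (t1 + 1) r"
    by (simp add: pochhammer_prod prod.distrib)
  finally show ?thesis .
qed


lemma Hf_step_ordered:
  fixes s1 t1 s2 t2 :: real
  assumes sum: "s1 + t1 = s2 + t2" and ord: "s1 \<le> s2" "t1 \<le> s1" "0 \<le> t2"
    and n: "n = 2 * k + r + 2"
    and E: "Hf s2 t2 n k \<le> Hf s1 t1 n k"
  shows "Hf s2 t2 n (Suc k) \<le> Hf s1 t1 n (Suc k)"
proof -
  define \<sigma>1 \<tau>1 \<sigma>2 \<tau>2 where "\<sigma>1 = s1 + k" and "\<tau>1 = t1 + k" and "\<sigma>2 = s2 + k" and "\<tau>2 = t2 + k"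
  define mu :: real where "mu = r + 1"
  define X1 where "X1 = pochhammer (\<sigma>1 + 1) r"
  define Y1 where "Y1 = pochhammer (\<tau>1 + 1) r"
  define X2 where "X2 = pochhammer (\<sigma>2 + 1) r"
  define Y2 where "Y2 = pochhammer (\<tau>2 + 1) r"
  define \<pi>1 where "\<pi>1 = pochhammer s1 k * pochhammer t1 k"
  define \<pi>2 where "\<pi>2 = pochhammer s2 k * pochhammer t2 k"
  define B1 where "B1 = \<sigma>1 * (\<sigma>1 + mu) * X1 + \<tau>1 * (\<tau>1 + mu) * Y1"
  define B2 where "B2 = \<sigma>2 * (\<sigma>2 + mu) * X2 + \<tau>2 * (\<tau>2 + mu) * Y2"
  define C1 where "C1 = \<sigma>1 * \<tau>1 * (X1 + Y1)"
  define C2 where "C2 = \<sigma>2 * \<tau>2 * (X2 + Y2)"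
  have t2le: "t2 \<le> t1" using sum ord by simp
  have H1: "Hf s1 t1 n k = \<pi>1 * B1" "Hf s1 t1 n (Suc k) = \<pi>1 * C1"
    unfolding \<pi>1_def B1_def C1_def \<sigma>1_def \<tau>1_def X1_def Y1_def mu_def
    by (rule Hf_fact1[OF n], rule Hf_fact2[OF n])
  have H2: "Hf s2 t2 n k = \<pi>2 * B2" "Hf s2 t2 n (Suc k) = \<pi>2 * C2"
    unfolding \<pi>2_def B2_def C2_def \<sigma>2_def \<tau>2_def X2_def Y2_def mu_def
    by (rule Hf_fact1[OF n], rule Hf_fact2[OF n])
  have nn: "0 \<le> \<tau>2" "\<tau>2 \<le> \<tau>1" "\<tau>1 \<le> \<sigma>1" "\<sigma>1 \<le> \<sigma>2"
    using ord t2le by (simp_all add: \<sigma>1_def \<tau>1_def \<sigma>2_def \<tau>2_def)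
  have mu0: "mu \<ge> 1" by (simp add: mu_def)
  have XY1: "Y2 \<ge> 0" unfolding Y2_def by (rule poch_nonneg) (use nn in simp)
  have XY2: "X2 \<ge> Y2" unfolding X2_def Y2_def by (rule poch_mono) (use nn in simp_all)
  have XY3: "Y1 \<ge> 0" unfolding Y1_def by (rule poch_nonneg) (use nn in simp)
  have XY4: "X1 \<ge> Y1" unfolding X1_def Y1_def by (rule poch_mono) (use nn in simp_all)
  have XY5: "X2 * Y1 \<ge> X1 * Y2" unfolding X1_def Y1_def X2_def Y2_def
    by (rule poch_cross) (use sum nn in \<open>simp_all add: \<sigma>1_def \<tau>1_def \<sigma>2_def \<tau>2_def\<close>)
  note XY = XY1 XY2 XY3 XY4 XY5
  have X2pos: "X2 > 0" unfolding X2_def by (rule poch_pos) (use nn in simp)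
  have sum': "\<sigma>1 + \<tau>1 = \<sigma>2 + \<tau>2" using sum by (simp add: \<sigma>1_def \<tau>1_def \<sigma>2_def \<tau>2_def)
  have br: "B1 * C2 \<le> C1 * B2"
    unfolding B1_def C2_def C1_def B2_def
    by (rule bracket_ineq[OF sum' nn(4) nn(3) nn(2) nn(1) _ XY]) (use mu0 in simp)
  have pi2: "0 \<le> \<pi>2" using ord t2le nn by (simp add: \<pi>2_def poch_nonneg)
  have pi12: "\<pi>2 \<le> \<pi>1" unfolding \<pi>1_def \<pi>2_def
  proof (rule poch_pair_mono[OF sum])
    have "s1 * t1 - s2 * t2 = (s2 - s1) * (s1 - t2)"
    proof -
      have t1e: "t1 = s2 + t2 - s1" using sum by simp
      show ?thesis by (simp only: t1e) (simp add: algebra_simps)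
    qed
    moreover have "(s2 - s1) * (s1 - t2) \<ge> 0" using ord t2le by simp
    ultimately show "s2 * t2 \<le> s1 * t1" by simp
  qed (use ord t2le in auto)
  have C1nn: "C1 \<ge> 0" using nn XY by (simp add: C1_def)
  have C2nn: "C2 \<ge> 0" using nn XY by (simp add: C2_def)
  have B2nn: "B2 \<ge> 0" using nn XY mu0 by (simp add: B2_def)
  have E': "\<pi>2 * B2 \<le> \<pi>1 * B1" using E H1 H2 by simp
  have key: "B2 * (\<pi>2 * C2) \<le> B2 * (\<pi>1 * C1)"
  proof -
    have "B2 * (\<pi>2 * C2) = (\<pi>2 * B2) * C2" by simp
    also have "\<dots> \<le> (\<pi>1 * B1) * C2" using E' C2nn by (rule mult_right_mono)
    also have "\<dots> = \<pi>1 * (B1 * C2)" by simp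
    also have "\<dots> \<le> \<pi>1 * (C1 * B2)" using br pi2 pi12 by (intro mult_left_mono) auto
    finally show ?thesis by (simp add: mult_ac)
  qed
  show ?thesis
  proof (cases "B2 = 0")
    case False
    hence B2pos: "B2 > 0" using B2nn by simp
    have "\<pi>2 * C2 \<le> \<pi>1 * C1" using key by (subst (asm) mult_le_cancel_left_pos[OF B2pos])
    thus ?thesis using H1 H2 by simp
  next
    case True
    have s20: "\<sigma>2 \<ge> 0" using nn by linarith
    have a: "\<sigma>2 * (\<sigma>2 + mu) * X2 \<ge> 0" using s20 XY mu0 X2pos by simp
    have b: "\<tau>2 * (\<tau>2 + mu) * Y2 \<ge> 0" using nn XY mu0 by simp
    have "\<sigma>2 * (\<sigma>2 + mu) * X2 = 0" using True a b unfolding B2_def by linarith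
    moreover have "\<sigma>2 + mu > 0" using s20 mu0 by linarith
    ultimately have "\<sigma>2 = 0" using X2pos by simp
    hence "C2 = 0" by (simp add: C2_def)
    have "0 \<le> \<pi>1 * C1" using pi2 pi12 C1nn by simp
    thus ?thesis using H1 H2 \<open>C2 = 0\<close> by simp
  qed
qed

lemma Hf_step:
  fixes s1 t1 s2 t2 :: real
  assumes sum: "s1 + t1 = s2 + t2" and ord: "s1 \<le> s2" "t1 \<le> s2" "0 \<le> t2"
    and n: "2 * k + 2 \<le> n"
    and E: "Hf s2 t2 n k \<le> Hf s1 t1 n k"
  shows "Hf s2 t2 n (Suc k) \<le> Hf s1 t1 n (Suc k)"
proof -
  define r where "r = n - 2 * k - 2"
  have n': "n = 2 * k + r + 2" using n by (simp add: r_def)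
  show ?thesis
  proof (cases "t1 \<le> s1")
    case True thus ?thesis using Hf_step_ordered[OF sum ord(1) True ord(3) n' E] by simp
  next
    case False
    have sum': "t1 + s1 = s2 + t2" using sum by simp
    have E': "Hf s2 t2 n k \<le> Hf t1 s1 n k" using E Hf_swap[of s1 t1 n k] by simp
    have "s1 \<le> t1" using False by simp
    from Hf_step_ordered[OF sum' ord(2) this ord(3) n' E']
    show ?thesis using Hf_swap[of s1 t1 n "Suc k"] by simp
  qed
qed


lemma Hf_mono_half:
  fixes s1 t1 s2 t2 :: real
  assumes sum: "s1 + t1 = s2 + t2" and ord: "s1 \<le> s2" "t1 \<le> s2" "0 \<le> t2"
    and kj: "k \<le> j" "2 * j \<le> n" and E: "Hf s2 t2 n k \<le> Hf s1 t1 n k"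
  shows "Hf s2 t2 n j \<le> Hf s1 t1 n j"
proof -
  have "\<And>d. k + d \<le> j \<Longrightarrow> Hf s2 t2 n (k + d) \<le> Hf s1 t1 n (k + d)"
  proof -
    fix d show "k + d \<le> j \<Longrightarrow> Hf s2 t2 n (k + d) \<le> Hf s1 t1 n (k + d)"
    proof (induction d)
      case 0 thus ?case using E by simp
    next
      case (Suc d)
      hence IH: "Hf s2 t2 n (k + d) \<le> Hf s1 t1 n (k + d)" by simp
      have "2 * (k + d) + 2 \<le> n" using Suc.prems kj by simp
      from Hf_step[OF sum ord this IH] show ?case by simp
    qed
  qed
  from this[of "j - k"] kj show ?thesis by simp
qed

lemma Hf_min: "k \<le> n \<Longrightarrow> Hf s t n (min k (n - k)) = Hf s t n k"
  by (cases "k \<le> n - k") (simp_all add: min_def Hf_rev)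

lemma E_signs:
  fixes s1 t1 s2 t2 :: real
  assumes sum: "s1 + t1 = s2 + t2" and ord: "s1 \<le> s2" "t1 \<le> s2" "0 \<le> t2"
    and kn: "k \<le> n" "j \<le> n" and m: "min k (n - k) \<le> min j (n - j)"
    and E: "Hf s2 t2 n k \<le> Hf s1 t1 n k"
  shows "Hf s2 t2 n j \<le> Hf s1 t1 n j"
proof -
  have E': "Hf s2 t2 n (min k (n - k)) \<le> Hf s1 t1 n (min k (n - k))"
    using E Hf_min[OF kn(1)] by simp
  have "2 * min j (n - j) \<le> n" by simp
  from Hf_mono_half[OF sum ord m this E'] show ?thesis using Hf_min[OF kn(2)] by simp
qed

definition rho :: "real \<Rightarrow> real \<Rightarrow> nat \<Rightarrow> nat \<Rightarrow> real" where
  "rho b c n k = pochhammer b k * pochhammer b (n - k) / (pochhammer c k * pochhammer c (n - k))"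

lemma rho_sym: "k \<le> n \<Longrightarrow> rho b c n (n - k) = rho b c n k"
  by (simp add: rho_def mult.commute)

lemma rho_step:
  assumes bc: "c < b" "0 < c" and n: "2 * k + 2 \<le> n"
  shows "rho b c n k < rho b c n (Suc k)"
proof -
  define j where "j = n - Suc k"
  have nk: "n - k = Suc j" using n by (simp add: j_def)
  have kj: "real k < real j" using n by (simp add: j_def)
  define Q where "Q = pochhammer b k * pochhammer b j / (pochhammer c k * pochhammer c j)"
  have Qpos: "Q > 0" using bc by (simp add: Q_def poch_pos)
  have r1: "rho b c n k = Q * ((b + j) / (c + j))"
    unfolding rho_def nk Q_def by (simp add: pochhammer_Suc field_simps)
  have r2: "rho b c n (Suc k) = Q * ((b + k) / (c + k))"
    unfolding rho_def Q_def j_def by (simp add: pochhammer_Suc field_simps)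
  have "(b + j) / (c + j) < (b + k) / (c + k)"
  proof -
    have cp: "c + j > 0" "c + k > 0" using bc by simp_all
    have "(b + j) * (c + k) < (b + k) * (c + j)"
    proof -
      have "(b + k) * (c + j) - (b + j) * (c + k) = (b - c) * (real j - real k)" by (simp add: algebra_simps)
      moreover have "(b - c) * (real j - real k) > 0" using bc kj by simp
      ultimately show ?thesis by simp
    qed
    thus ?thesis using cp by (simp add: divide_simps)
  qed
  hence "Q * ((b + j) / (c + j)) < Q * ((b + k) / (c + k))" using Qpos by (rule mult_strict_left_mono)
  thus ?thesis by (simp only: r1 r2)
qed

lemma rho_mono_half:
  assumes bc: "c < b" "0 < c" and ij: "i < j" "2 * j \<le> n"
  shows "rho b c n i < rho b c n j"
proof -
  have "\<And>d. 2 * (i + Suc d) \<le> n \<Longrightarrow> rho b c n i < rho b c n (i + Suc d)"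
  proof -
    fix d show "2 * (i + Suc d) \<le> n \<Longrightarrow> rho b c n i < rho b c n (i + Suc d)"
    proof (induction d)
      case 0 thus ?case using rho_step[OF bc, of i n] by simp
    next
      case (Suc d)
      hence IH: "rho b c n i < rho b c n (i + Suc d)" by simp
      have "2 * (i + Suc d) + 2 \<le> n" using Suc.prems by simp
      from rho_step[OF bc this] IH show ?case by simp
    qed
  qed
  from this[of "j - i - 1"] ij show ?thesis by simp
qed

lemma rho_min: "k \<le> n \<Longrightarrow> rho b c n (min k (n - k)) = rho b c n k"
  by (cases "k \<le> n - k") (simp_all add: min_def rho_sym)

lemma rho_K1:
  assumes bc: "c < b" "0 < c" and kn: "k \<le> n" "j \<le> n" and m: "min j (n - j) < min k (n - k)"
  shows "rho b c n j < rho b c n k"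
proof -
  have "2 * min k (n - k) \<le> n" by simp
  from rho_mono_half[OF bc m this] show ?thesis using rho_min[OF kn(1)] rho_min[OF kn(2)] by simp
qed

lemma sign_sum:
  fixes w rho E :: "nat \<Rightarrow> real" and l :: "nat \<Rightarrow> nat"
  assumes w: "\<And>k. k \<le> n \<Longrightarrow> w k > 0"
    and zero: "(\<Sum>k\<le>n. w k * E k) = 0"
    and K2: "\<And>k j. k \<le> n \<Longrightarrow> j \<le> n \<Longrightarrow> E k \<ge> 0 \<Longrightarrow> l k \<le> l j \<Longrightarrow> E j \<ge> 0"
    and K1: "\<And>k j. k \<le> n \<Longrightarrow> j \<le> n \<Longrightarrow> l j < l k \<Longrightarrow> rho j < rho k"
    and i: "i \<le> n" "E i > 0"
  shows "(\<Sum>k\<le>n. w k * rho k * E k) > 0"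
proof -
  define N where "N = {j \<in> {..n}. E j < 0}"
  have finN: "finite N" by (simp add: N_def)
  have Nne: "N \<noteq> {}"
  proof
    assume "N = {}"
    hence nn: "\<And>k. k \<le> n \<Longrightarrow> E k \<ge> 0" by (force simp: N_def)
    have "w i * E i \<le> (\<Sum>k\<le>n. w k * E k)"
      using i nn w by (intro member_le_sum) (auto intro: mult_nonneg_nonneg less_imp_le)
    moreover have "w i * E i > 0" using w[OF i(1)] i by simp
    ultimately show False using zero by simp
  qed
  define \<theta> where "\<theta> = Max (rho ` N)"
  have th_ge: "rho j \<le> \<theta>" if "j \<in> N" for j unfolding \<theta>_def using finN that by simp
  have th_in: "\<theta> \<in> rho ` N" unfolding \<theta>_def using finN Nne by simp
  have pos_case: "rho k > \<theta>" if "k \<le> n" "E k > 0" for k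
  proof -
    from th_in obtain j where j: "j \<in> N" "\<theta> = rho j" by auto
    have jn: "j \<le> n" "E j < 0" using j by (auto simp: N_def)
    have "\<not> l k \<le> l j" using K2[OF that(1) jn(1)] that jn by force
    hence "l j < l k" by simp
    thus ?thesis using K1[OF that(1) jn(1)] j by simp
  qed
  have term_nn: "w k * (rho k - \<theta>) * E k \<ge> 0" if "k \<le> n" for k
  proof (cases "E k" "0 :: real" rule: linorder_cases)
    case less
    hence "k \<in> N" using that by (simp add: N_def)
    hence "rho k - \<theta> \<le> 0" using th_ge by simp
    thus ?thesis using less w[OF that] by (simp add: mult_nonpos_nonpos mult_nonneg_nonpos)
  next
    case equal thus ?thesis by simp
  next
    case greater
    thus ?thesis using pos_case[OF that greater] w[OF that] by simp
  qed
  have "(\<Sum>k\<le>n. w k * rho k * E k) = (\<Sum>k\<le>n. w k * (rho k - \<theta>) * E k) + \<theta> * (\<Sum>k\<le>n. w k * E k)"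
    by (simp add: sum_distrib_left sum.distrib[symmetric] algebra_simps)
  also have "\<dots> = (\<Sum>k\<le>n. w k * (rho k - \<theta>) * E k)" using zero by simp
  also have "\<dots> \<ge> w i * (rho i - \<theta>) * E i"
    using term_nn i by (intro member_le_sum) auto
  finally have "(\<Sum>k\<le>n. w k * rho k * E k) \<ge> w i * (rho i - \<theta>) * E i" .
  moreover have "w i * (rho i - \<theta>) * E i > 0" using pos_case[OF i] w[OF i(1)] i by simp
  ultimately show ?thesis by simp
qed


lemma Hf_mid:
  "Hf s t n (n div 2) = pochhammer s (n div 2) * pochhammer t (n div 2) *
      (if even n then 2 else s + t + 2 * real (n div 2))"
proof (cases "even n")
  case True
  hence "n - n div 2 = n div 2" by presburger
  thus ?thesis using True by (simp add: Hf_def)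
next
  case False
  hence "n - n div 2 = Suc (n div 2)" by presburger
  thus ?thesis using False by (simp add: Hf_def pochhammer_Suc algebra_simps)
qed

lemma Hf_vandermonde:
  "(\<Sum>k\<le>n. of_nat (n choose k) * Hf s t n k) = 2 * pochhammer (s + t) n"
proof -
  have a: "(\<Sum>k\<le>n. of_nat (n choose k) * (pochhammer s (n - k) * pochhammer t k)) =
        (\<Sum>k\<le>n. of_nat (n choose k) * pochhammer s k * pochhammer t (n - k))"
  proof -
    have "(\<Sum>k\<le>n. of_nat (n choose k) * (pochhammer s (n - k) * pochhammer t k)) =
          (\<Sum>k\<le>n. of_nat (n choose (n - k)) * (pochhammer s (n - (n - k)) * pochhammer t (n - k)))"
      by (rule sum_rev_atMost[symmetric])
    also have "\<dots> = (\<Sum>k\<le>n. of_nat (n choose k) * pochhammer s k * pochhammer t (n - k))"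
      by (intro sum.cong refl) (simp add: binomial_symmetric[symmetric] mult.assoc)
    finally show ?thesis .
  qed
  have "(\<Sum>k\<le>n. of_nat (n choose k) * Hf s t n k) =
     (\<Sum>k\<le>n. of_nat (n choose k) * pochhammer s k * pochhammer t (n - k)) +
     (\<Sum>k\<le>n. of_nat (n choose k) * (pochhammer s (n - k) * pochhammer t k))"
    by (simp add: Hf_def sum.distrib algebra_simps)
  also have "\<dots> = 2 * pochhammer (s + t) n" using a poch_vandermonde[of n s t] by simp
  finally show ?thesis .
qed

theorem partA:
  assumes a0: "0 \<le> a" and aa: "a < a'" and d: "0 < \<delta>" and bc: "c < b" "0 < c" and n2: "2 \<le> n"
  shows "(\<Sum>k\<le>n. hg_coef (a + \<delta>) b c k * hg_coef a' b c (n - k)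
                 - hg_coef (a' + \<delta>) b c k * hg_coef a b c (n - k)) > 0"
proof -
  define s1 t1 s2 t2 where "s1 = a + \<delta>" and "t1 = a'" and "s2 = a' + \<delta>" and "t2 = a"
  define D where "D k = pochhammer s1 k * pochhammer t1 (n - k) - pochhammer s2 k * pochhammer t2 (n - k)" for k
  define E where "E k = Hf s1 t1 n k - Hf s2 t2 n k" for k
  define w :: "nat \<Rightarrow> real" where "w k = of_nat (n choose k)" for k
  have sum: "s1 + t1 = s2 + t2" by (simp add: s1_def t1_def s2_def t2_def)
  have ord: "s1 \<le> s2" "t1 \<le> s2" "0 \<le> t2" using aa d a0 by (simp_all add: s1_def t1_def s2_def t2_def)
  have P12: "s2 * t2 < s1 * t1"
  proof -
    have "s1 * t1 - s2 * t2 = \<delta> * (a' - a)" by (simp add: s1_def t1_def s2_def t2_def algebra_simps)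
    moreover have "\<delta> * (a' - a) > 0" using d aa by simp
    ultimately show ?thesis by simp
  qed
  have fn: "fact n > (0::real)" by simp
  have step1: "hg_coef (a + \<delta>) b c k * hg_coef a' b c (n - k) - hg_coef (a' + \<delta>) b c k * hg_coef a b c (n - k)
      = w k * rho b c n k * D k / fact n" if "k \<le> n" for k
  proof -
    have cp: "pochhammer c k > 0" "pochhammer c (n - k) > 0" using bc by (simp_all add: poch_pos)
    have w: "w k = fact n / (fact k * fact (n - k))" using that by (simp add: w_def binomial_fact)
    show ?thesis unfolding w hg_coef_def rho_def D_def s1_def t1_def s2_def t2_def
      using cp by (simp add: field_simps)
  qed
  have LHS: "(\<Sum>k\<le>n. hg_coef (a + \<delta>) b c k * hg_coef a' b c (n - k) - hg_coef (a' + \<delta>) b c k * hg_coef a b c (n - k))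
      = (\<Sum>k\<le>n. w k * rho b c n k * D k) / fact n"
    by (simp add: step1 sum_divide_distrib)
  have step2: "2 * (\<Sum>k\<le>n. w k * rho b c n k * D k) = (\<Sum>k\<le>n. w k * rho b c n k * E k)"
  proof -
    have "(\<Sum>k\<le>n. w k * rho b c n k * D k) = (\<Sum>k\<le>n. w (n - k) * rho b c n (n - k) * D (n - k))"
      by (rule sum_rev_atMost[symmetric])
    also have "\<dots> = (\<Sum>k\<le>n. w k * rho b c n k * D (n - k))"
      by (intro sum.cong refl) (simp add: w_def rho_sym binomial_symmetric[symmetric])
    finally have r: "(\<Sum>k\<le>n. w k * rho b c n k * D k) = (\<Sum>k\<le>n. w k * rho b c n k * D (n - k))" .
    have "E k = D k + D (n - k)" if "k \<le> n" for k
      using that by (simp add: E_def D_def Hf_def algebra_simps)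
    hence "(\<Sum>k\<le>n. w k * rho b c n k * E k) = (\<Sum>k\<le>n. w k * rho b c n k * D k) + (\<Sum>k\<le>n. w k * rho b c n k * D (n - k))"
      by (simp add: sum.distrib[symmetric] algebra_simps)
    thus ?thesis using r by simp
  qed
  have zero: "(\<Sum>k\<le>n. w k * E k) = 0"
  proof -
    have "(\<Sum>k\<le>n. w k * E k) = (\<Sum>k\<le>n. of_nat (n choose k) * Hf s1 t1 n k) - (\<Sum>k\<le>n. of_nat (n choose k) * Hf s2 t2 n k)"
      by (simp add: w_def E_def sum_subtractf algebra_simps)
    thus ?thesis by (simp add: Hf_vandermonde sum)
  qed
  have mid: "E (n div 2) > 0"
  proof -
    define k where "k = n div 2"
    have k1: "k \<ge> 1" using n2 by (simp add: k_def)
    have pp: "pochhammer s2 k * pochhammer t2 k < pochhammer s1 k * pochhammer t1 k"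
      by (rule poch_pair_strict[OF sum P12 _ ord(3) k1]) (use a0 aa d in \<open>simp add: s2_def\<close>)
    define co where "co = (if even n then 2 else s1 + t1 + 2 * real k)"
    have co2: "co = (if even n then 2 else s2 + t2 + 2 * real k)" using sum by (simp add: co_def)
    have copos: "co > 0" using ord sum k1 by (simp add: co_def)
    have "E k = co * (pochhammer s1 k * pochhammer t1 k - pochhammer s2 k * pochhammer t2 k)"
      unfolding E_def k_def Hf_mid
      by (simp only: co_def[unfolded k_def, symmetric] co2[unfolded k_def, symmetric]) (simp add: algebra_simps)
    thus ?thesis using pp copos by (simp add: k_def)
  qed
  have pos: "(\<Sum>k\<le>n. w k * rho b c n k * E k) > 0"
  proof (rule sign_sum[where l="\<lambda>k. min k (n - k)"])
    show "\<And>k. k \<le> n \<Longrightarrow> w k > 0" by (simp add: w_def)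
    show "(\<Sum>k\<le>n. w k * E k) = 0" by (rule zero)
    show "E j \<ge> 0" if "k \<le> n" "j \<le> n" "E k \<ge> 0" "min k (n - k) \<le> min j (n - j)" for k j
      using E_signs[OF sum ord that(1,2,4)] that(3) by (simp add: E_def)
    show "rho b c n j < rho b c n k" if "k \<le> n" "j \<le> n" "min j (n - j) < min k (n - k)" for k j
      by (rule rho_K1[OF bc that])
    show "n div 2 \<le> n" by simp
    show "E (n div 2) > 0" by (rule mid)
  qed
  show ?thesis unfolding LHS using pos step2 fn by simp
qed


lemma poch_neg_nat:
  assumes "k \<le> N"
  shows "pochhammer (- real N) k = (-1)^k * fact N / fact (N - k)"
proof -
  have "(real N gchoose k) = (-1)^k * pochhammer (- real N) k / fact k"
    by (rule gbinomial_pochhammer)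
  moreover have "(real N gchoose k) = real (N choose k)" by (simp add: binomial_gbinomial)
  moreover have "real (N choose k) = fact N / (fact k * fact (N - k))"
    using assms by (simp add: binomial_fact)
  ultimately have "pochhammer (- real N) k = (-1)^k * fact k * (fact N / (fact k * fact (N - k)))"
    by (simp add: field_simps)
  thus ?thesis by simp
qed

lemma chu:
  fixes a c :: real
  assumes c: "c > 0"
  shows "(\<Sum>n\<le>N. pochhammer a n * (-1)^n / (pochhammer c n * fact n * fact (N - n)))
       = pochhammer (c - a) N / (pochhammer c N * fact N)"
proof -
  have cc: "\<forall>i\<in>{0..<N}. c \<noteq> - of_nat i"
  proof
    fix i :: nat assume "i \<in> {0..<N}"
    have "- (of_nat i :: real) \<le> 0" by simp
    thus "c \<noteq> - of_nat i" using c by linarith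
  qed
  have V: "(\<Sum>k = 0..N. pochhammer a k * pochhammer (- of_nat N) k / (of_nat (fact k) * pochhammer c k))
     = pochhammer (c - a) N / pochhammer c N" by (rule Vandermonde_pochhammer[OF cc])
  have "(\<Sum>k = 0..N. pochhammer a k * pochhammer (- of_nat N) k / (of_nat (fact k) * pochhammer c k))
      = fact N * (\<Sum>n\<le>N. pochhammer a n * (-1)^n / (pochhammer c n * fact n * fact (N - n)))"
    unfolding atMost_atLeast0 sum_distrib_left
  proof (intro sum.cong refl)
    fix k assume "k \<in> {0..N}"
    hence "k \<le> N" by simp
    thus "pochhammer a k * pochhammer (- of_nat N) k / (of_nat (fact k) * pochhammer c k) =
       fact N * (pochhammer a k * (-1)^k / (pochhammer c k * fact k * fact (N - k)))"
      unfolding poch_neg_nat[OF \<open>k \<le> N\<close>] by (simp add: field_simps)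
  qed
  with V have eq: "fact N * (\<Sum>n\<le>N. pochhammer a n * (-1)^n / (pochhammer c n * fact n * fact (N - n)))
      = pochhammer (c - a) N / pochhammer c N" by simp
  have cN: "pochhammer c N > 0" using c by (simp add: pochhammer_pos)
  have fN: "(fact N :: real) > 0" by simp
  from eq cN fN show ?thesis by (simp add: field_simps)
qed

lemma binom_series:
  fixes y beta :: real
  assumes "\<bar>y\<bar> < 1"
  shows "(\<lambda>m. pochhammer beta m / fact m * y ^ m) sums (1 - y) powr (- beta)"
proof -
  have "\<bar>-y\<bar> < 1" using assms by simp
  from gen_binomial_real[OF this, of "-beta"]
  have "(\<lambda>m. ((-beta) gchoose m) * (-y)^m) sums (1 + - y) powr (-beta)" .
  moreover have "((-beta) gchoose m) * (-y)^m = pochhammer beta m / fact m * y ^ m" for m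
  proof -
    have "((-beta) gchoose m) * (-y)^m = ((-1)^m * (-1)^m) * (pochhammer beta m / fact m * y ^ m)"
      by (simp add: gbinomial_pochhammer power_minus[of y] field_simps)
    also have "(-1::real)^m * (-1)^m = 1" by (simp flip: power_add)
    finally show ?thesis by simp
  qed
  ultimately show ?thesis by simp
qed

lemma abs_poch_le: "\<bar>pochhammer (z::real) m\<bar> \<le> pochhammer \<bar>z\<bar> m"
proof -
  have "\<bar>pochhammer z m\<bar> = (\<Prod>i = 0..<m. \<bar>z + i\<bar>)" by (simp add: pochhammer_prod abs_prod)
  also have "\<dots> \<le> (\<Prod>i = 0..<m. \<bar>z\<bar> + i)" by (intro prod_mono) auto
  finally show ?thesis by (simp add: pochhammer_prod)
qed

lemma pair_summable_nonneg:
  fixes M :: "nat \<Rightarrow> nat \<Rightarrow> real"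
  assumes nn: "\<And>n m. M n m \<ge> 0" and rows: "\<And>n. M n sums r n" and sr: "summable r"
  shows "(\<lambda>(n,m). M n m) summable_on UNIV"
proof -
  have hs: "(M n has_sum r n) UNIV" for n by (rule sums_nonneg_imp_has_sum[OF rows nn])
  have rnn: "r n \<ge> 0" for n
  proof -
    have "suminf (M n) \<ge> 0" using rows[of n] nn by (intro suminf_nonneg) (auto simp: sums_iff)
    thus ?thesis using rows[of n] by (simp add: sums_iff)
  qed
  have e: "(\<lambda>m. norm (case (n, m) of (n, m) \<Rightarrow> M n m)) = M n" for n using nn by (simp add: fun_eq_iff)
  have rowS: "(\<lambda>m. norm (case (n, m) of (n, m) \<Rightarrow> M n m)) summable_on UNIV" for n
    unfolding e summable_on_def using hs by blast
  have eqr: "(\<Sum>\<^sub>\<infinity>m\<in>UNIV. norm (case (n, m) of (n, m) \<Rightarrow> M n m)) = r n" for n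
    unfolding e by (rule infsumI[OF hs])
  have rS: "(\<lambda>x. norm (r x)) summable_on UNIV"
    using sr rnn by (simp add: summable_on_UNIV_nonneg_real_iff)
  have "(\<lambda>x. norm ((\<lambda>(n,m). M n m) x)) summable_on Sigma UNIV (\<lambda>_. UNIV)"
    apply (rule Infinite_Sum.abs_summable_on_Sigma_iff[THEN iffD2])
    apply (rule conjI)
    subgoal using rowS by blast
    subgoal unfolding eqr by (rule rS)
    done
  thus ?thesis using summable_on_iff_abs_summable_on_real[of "\<lambda>(n,m). M n m" "UNIV"] by simp
qed


lemma double_sum:
  fixes T :: "nat \<Rightarrow> nat \<Rightarrow> real"
  assumes S: "(\<lambda>(n,m). T n m) summable_on UNIV"
  shows "(\<lambda>n. \<Sum>m. T n m) sums infsum (\<lambda>(n,m). T n m) UNIV"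
    and "(\<lambda>N. \<Sum>n\<le>N. T n (N - n)) sums infsum (\<lambda>(n,m). T n m) UNIV"
proof -
  have S': "(\<lambda>(n,m). T n m) summable_on Sigma UNIV (\<lambda>_. UNIV)" using S by simp
  have rowsum: "T n summable_on UNIV" for n
    by (rule summable_on_SigmaD1[OF S']) simp
  have rowinf: "infsum (T n) UNIV = (\<Sum>m. T n m)" for n
    using has_sum_imp_sums[OF has_sum_infsum[OF rowsum[of n]]] by (simp add: sums_iff)
  have "(\<lambda>n. infsum (T n) UNIV) summable_on UNIV" by (rule summable_on_Sigma_banach[OF S'])
  moreover have "infsum (\<lambda>n. infsum (T n) UNIV) UNIV = infsum (\<lambda>(n,m). T n m) UNIV"
    using infsum_Sigma'_banach[OF S'] by simp
  ultimately have "((\<lambda>n. infsum (T n) UNIV) has_sum infsum (\<lambda>(n,m). T n m) UNIV) UNIV"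
    by (metis has_sum_infsum)
  from has_sum_imp_sums[OF this] show "(\<lambda>n. \<Sum>m. T n m) sums infsum (\<lambda>(n,m). T n m) UNIV"
    by (simp add: rowinf)
  define g where "g = (\<lambda>(N::nat, n::nat). (n, N - n))"
  have bij: "bij_betw g (Sigma UNIV (\<lambda>N. {..N})) UNIV"
    by (rule bij_betwI[where g="\<lambda>(n, m). (n + m, n)"]) (auto simp: g_def)
  have S2: "(\<lambda>(N, n). T n (N - n)) summable_on Sigma UNIV (\<lambda>N. {..N})"
  proof -
    have "(\<lambda>x. (\<lambda>(n,m). T n m) (g x)) summable_on Sigma UNIV (\<lambda>N. {..N})"
      using summable_on_reindex_bij_betw[OF bij, of "\<lambda>(n,m). T n m"] S by simp
    thus ?thesis by (simp add: g_def case_prod_unfold)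
  qed
  have I2: "infsum (\<lambda>(N, n). T n (N - n)) (Sigma UNIV (\<lambda>N. {..N})) = infsum (\<lambda>(n,m). T n m) UNIV"
  proof -
    have "infsum (\<lambda>x. (\<lambda>(n,m). T n m) (g x)) (Sigma UNIV (\<lambda>N. {..N})) = infsum (\<lambda>(n,m). T n m) UNIV"
      by (rule infsum_reindex_bij_betw[OF bij])
    thus ?thesis by (simp add: g_def case_prod_unfold)
  qed
  have "(\<lambda>N. infsum (\<lambda>n. T n (N - n)) {..N}) summable_on UNIV"
    using summable_on_Sigma_banach[of "\<lambda>N n. T n (N - n)" UNIV "\<lambda>N. {..N}"] S2 by simp
  moreover have "infsum (\<lambda>N. infsum (\<lambda>n. T n (N - n)) {..N}) UNIV = infsum (\<lambda>(n,m). T n m) UNIV"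
    using infsum_Sigma'_banach[of "\<lambda>N n. T n (N - n)" UNIV "\<lambda>N. {..N}"] S2 I2 by simp
  ultimately have "((\<lambda>N. infsum (\<lambda>n. T n (N - n)) {..N}) has_sum infsum (\<lambda>(n,m). T n m) UNIV) UNIV"
    by (metis has_sum_infsum)
  from has_sum_imp_sums[OF this] show "(\<lambda>N. \<Sum>n\<le>N. T n (N - n)) sums infsum (\<lambda>(n,m). T n m) UNIV"
    by simp
qed


lemma powr_shift_nat:
  fixes q e :: real
  assumes "q > 0"
  shows "q powr (-(e + real n)) = q powr (-e) / q ^ n"
proof -
  have "q powr (-(e + real n)) = q powr (-e) * q powr (- real n)" by (simp add: powr_add[symmetric])
  also have "q powr (- real n) = 1 / q ^ n" using assms by (simp add: powr_minus_divide powr_realpow)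
  finally show ?thesis by simp
qed

lemma pfaff:
  fixes a b c x :: real
  assumes c: "c > 0" and x: "-1 < x" "x \<le> 0"
  shows "Sr a b c x = (1 - x) powr (-b) * Sr (c - a) b c (x / (x - 1))"
proof -
  define y where "y = x / (x - 1)"
  have xm1: "x - 1 < 0" using x by simp
  have y0: "y \<ge> 0" using x xm1 by (simp add: y_def divide_nonpos_neg)
  have y1: "y < 1" using x xm1 by (simp add: y_def divide_less_eq)
  have omy: "1 - y = 1 / (1 - x)" using xm1 by (simp add: y_def field_simps)
  have omy_pos: "1 - y > 0" using y1 by simp
  have xy: "-y / (1 - y) = x" using xm1 by (simp add: y_def field_simps)
  have ay: "\<bar>y\<bar> < 1" using y0 y1 by simp
  have xy': "- (y / (1 - y)) = x" using xy by (metis minus_divide_left)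
  have ax: "\<bar>x\<bar> < 1" using x by simp
  have xabs: "y / (1 - y) = \<bar>x\<bar>" using xy x by (simp add: minus_divide_left[symmetric])
  define T where "T n m = hg_coef a b c n * (-y)^n * (pochhammer (b + n) m / fact m * y ^ m)" for n m
  define M where "M n m = \<bar>hg_coef a b c n\<bar> * y^n * (pochhammer (\<bar>b\<bar> + n) m / fact m * y ^ m)" for n m
  define r where "r n = (1 - y) powr (-\<bar>b\<bar>) * (\<bar>hg_coef a b c n\<bar> * \<bar>x\<bar>^n)" for n
  have Mnn: "M n m \<ge> 0" for n m using y0 by (simp add: M_def poch_nonneg)
  have rowsM: "M n sums r n" for n
  proof -
    have "M n sums (\<bar>hg_coef a b c n\<bar> * y^n * (1 - y) powr (-(\<bar>b\<bar> + n)))"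
      unfolding M_def by (intro sums_mult binom_series ay)
    moreover have "\<bar>hg_coef a b c n\<bar> * y^n * (1 - y) powr (-(\<bar>b\<bar> + n)) = r n"
    proof -
      have "\<bar>hg_coef a b c n\<bar> * y^n * (1 - y) powr (-(\<bar>b\<bar> + n)) =
            (1 - y) powr (-\<bar>b\<bar>) * (\<bar>hg_coef a b c n\<bar> * (y / (1 - y))^n)"
        by (simp only: powr_shift_nat[OF omy_pos]) (simp add: power_divide)
      thus ?thesis by (simp add: r_def xabs)
    qed
    ultimately show ?thesis by simp
  qed
  have sr: "summable r" unfolding r_def
    by (intro summable_mult) (use hg_summable_abs[OF c ax, of a b] in \<open>simp add: abs_mult power_abs\<close>)
  have SM: "(\<lambda>(n,m). M n m) summable_on UNIV" by (rule pair_summable_nonneg[OF Mnn rowsM sr])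
  have TM: "norm (T n m) \<le> M n m" for n m
  proof -
    have "\<bar>pochhammer (b + n) m\<bar> \<le> pochhammer \<bar>b + n\<bar> m" by (rule abs_poch_le)
    also have "\<dots> \<le> pochhammer (\<bar>b\<bar> + n) m" by (rule poch_mono) auto
    finally have p: "\<bar>pochhammer (b + n) m\<bar> \<le> pochhammer (\<bar>b\<bar> + n) m" .
    have "norm (T n m) = (\<bar>hg_coef a b c n\<bar> * y^n * y^m / fact m) * \<bar>pochhammer (b + n) m\<bar>"
      using y0 by (simp add: T_def abs_mult power_abs)
    also have "\<dots> \<le> (\<bar>hg_coef a b c n\<bar> * y^n * y^m / fact m) * pochhammer (\<bar>b\<bar> + n) m"
      using p y0 by (intro mult_left_mono) auto
    also have "\<dots> = M n m" by (simp add: M_def)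
    finally show ?thesis .
  qed
  have TM': "\<bar>T n m\<bar> \<le> M n m" for n m using TM[of n m] by simp
  have ST: "(\<lambda>(n,m). T n m) summable_on UNIV"
  proof -
    have "(\<lambda>p. norm ((\<lambda>(n,m). T n m) p)) summable_on UNIV"
    proof (rule summable_on_comparison_test[OF SM])
      fix p :: "nat \<times> nat"
      obtain n m where p: "p = (n, m)" by (cases p)
      show "norm ((\<lambda>(n,m). T n m) p) \<le> (\<lambda>(n,m). M n m) p" using TM[of n m] by (simp add: p)
      show "0 \<le> norm ((\<lambda>(n,m). T n m) p)" by simp
    qed
    thus ?thesis by (rule abs_summable_summable)
  qed
  define I where "I = infsum (\<lambda>(n,m). T n m) UNIV"
  note DS = double_sum[OF ST, folded I_def]
  have rowT: "(\<Sum>m. T n m) = (1 - y) powr (-b) * (hg_coef a b c n * x^n)" for n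
  proof -
    have "T n sums (hg_coef a b c n * (-y)^n * (1 - y) powr (-(b + n)))"
      unfolding T_def by (intro sums_mult binom_series ay)
    moreover have "hg_coef a b c n * (-y)^n * (1 - y) powr (-(b + n)) = (1 - y) powr (-b) * (hg_coef a b c n * x^n)"
    proof -
      have pw: "(-y / (1 - y))^n = (-y)^n / (1 - y)^n" by (rule power_divide)
      have "hg_coef a b c n * (-y)^n * (1 - y) powr (-(b + n)) =
            (1 - y) powr (-b) * (hg_coef a b c n * (-y / (1 - y))^n)"
        by (simp only: powr_shift_nat[OF omy_pos] pw) simp
      thus ?thesis by (simp only: xy)
    qed
    ultimately show ?thesis by (simp add: sums_iff)
  qed
  have I1: "I = (1 - y) powr (-b) * Sr a b c x"
  proof -
    have "(\<lambda>n. (1 - y) powr (-b) * (hg_coef a b c n * x^n)) sums ((1 - y) powr (-b) * Sr a b c x)"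
      by (intro sums_mult hg_sums c ax)
    moreover have "(\<lambda>n. (1 - y) powr (-b) * (hg_coef a b c n * x^n)) sums I" using DS(1) by (simp add: rowT)
    ultimately show ?thesis using sums_unique2 by blast
  qed
  have diag: "(\<Sum>n\<le>N. T n (N - n)) = hg_coef (c - a) b c N * y ^ N" for N
  proof -
    have "(\<Sum>n\<le>N. T n (N - n)) = (\<Sum>n\<le>N. y^N * pochhammer b N *
            (pochhammer a n * (-1)^n / (pochhammer c n * fact n * fact (N - n))))"
    proof (intro sum.cong refl)
      fix n assume "n \<in> {..N}"
      hence nN: "n \<le> N" by simp
      have pb: "pochhammer b N = pochhammer b n * pochhammer (b + n) (N - n)"
        using pochhammer_product[OF nN, of b] by simp
      have yy: "y ^ n * y ^ (N - n) = y ^ N" using nN by (simp flip: power_add)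
      show "T n (N - n) = y^N * pochhammer b N * (pochhammer a n * (-1)^n / (pochhammer c n * fact n * fact (N - n)))"
        unfolding T_def hg_coef_def pb yy[symmetric] by (simp add: power_minus[of y] field_simps)
    qed
    also have "\<dots> = y^N * pochhammer b N * (pochhammer (c - a) N / (pochhammer c N * fact N))"
      by (simp only: sum_distrib_left[symmetric] chu[OF c])
    also have "\<dots> = hg_coef (c - a) b c N * y ^ N" by (simp add: hg_coef_def field_simps)
    finally show ?thesis .
  qed
  have I2: "I = Sr (c - a) b c y"
  proof -
    have "(\<lambda>N. hg_coef (c - a) b c N * y ^ N) sums I" using DS(2) by (simp add: diag)
    moreover have "(\<lambda>N. hg_coef (c - a) b c N * y ^ N) sums Sr (c - a) b c y" by (rule hg_sums[OF c ay])
    ultimately show ?thesis using sums_unique2 by blast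
  qed
  have "Sr a b c x = (1 - y) powr b * Sr (c - a) b c y"
  proof -
    have "(1 - y) powr b * ((1 - y) powr (-b) * Sr a b c x) = Sr a b c x"
      using omy_pos by (simp add: powr_minus field_simps)
    thus ?thesis using I1 I2 by simp
  qed
  moreover have "(1 - y) powr b = (1 - x) powr (-b)"
    using xm1 by (simp add: omy powr_divide powr_minus_divide)
  ultimately show ?thesis by (simp add: y_def)
qed


lemma powser_unique_right:
  fixes u :: "nat \<Rightarrow> real"
  assumes r: "r > 0"
    and sm: "\<And>y. \<bar>y\<bar> < r \<Longrightarrow> summable (\<lambda>n. u n * y ^ n)"
    and z: "\<And>y. 0 < y \<Longrightarrow> y < r \<Longrightarrow> (\<Sum>n. u n * y ^ n) = 0"
  shows "u n = 0"
  using sm z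
proof (induction n arbitrary: u)
  case 0
  define f where "f x = (\<Sum>n. u n * x ^ n)" for x :: real
  have "(f \<longlongrightarrow> u 0) (at 0)"
  proof (rule powser_limit_0_strong[OF r])
    fix x :: real assume "x \<noteq> 0" "norm x < r"
    thus "(\<lambda>n. u n * x ^ n) sums f x" using 0 by (simp add: f_def summable_sums)
  qed
  hence l1: "(f \<longlongrightarrow> u 0) (at_right 0)" by (rule tendsto_within_subset) simp
  have "eventually (\<lambda>x. f x = 0) (at_right (0::real))"
    unfolding eventually_at_right_field using r 0 by (auto simp: f_def intro!: exI[of _ r])
  hence l2: "(f \<longlongrightarrow> 0) (at_right 0)" by (rule tendsto_eventually)
  from tendsto_unique[OF _ l1 l2] show ?case by simp
next
  case (Suc n)
  have "(\<lambda>n. u (Suc n)) n = 0"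
  proof (rule Suc.IH)
    fix y :: real assume y: "\<bar>y\<bar> < r"
    show "summable (\<lambda>n. u (Suc n) * y ^ n)" using powser_split_head(3)[OF Suc.prems(1)[OF y]] .
  next
    fix y :: real assume y: "0 < y" "y < r"
    have ay: "\<bar>y\<bar> < r" using y by simp
    have "(\<Sum>n. u (Suc n) * y ^ n) * y = (\<Sum>n. u n * y ^ n) - u 0"
      by (rule powser_split_head(2)[OF Suc.prems(1)[OF ay]])
    also have "(\<Sum>n. u n * y ^ n) = 0" by (rule Suc.prems(2)[OF y])
    also have "u 0 = 0"
    proof -
      have "\<forall>u. (\<forall>y. \<bar>y\<bar> < r \<longrightarrow> summable (\<lambda>n. u n * y ^ n)) \<longrightarrow>
                 (\<forall>y. 0 < y \<longrightarrow> y < r \<longrightarrow> (\<Sum>n. u n * y ^ n) = 0) \<longrightarrow> u 0 = 0"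
      proof (intro allI impI)
        fix u :: "nat \<Rightarrow> real"
        assume A: "\<forall>y. \<bar>y\<bar> < r \<longrightarrow> summable (\<lambda>n. u n * y ^ n)"
           and B: "\<forall>y. 0 < y \<longrightarrow> y < r \<longrightarrow> (\<Sum>n. u n * y ^ n) = 0"
        define f where "f x = (\<Sum>n. u n * x ^ n)" for x :: real
        have "(f \<longlongrightarrow> u 0) (at 0)"
        proof (rule powser_limit_0_strong[OF r])
          fix x :: real assume "x \<noteq> 0" "norm x < r"
          thus "(\<lambda>n. u n * x ^ n) sums f x" using A by (simp add: f_def summable_sums)
        qed
        hence l1: "(f \<longlongrightarrow> u 0) (at_right 0)" by (rule tendsto_within_subset) simp
        have "eventually (\<lambda>x. f x = 0) (at_right (0::real))"
          unfolding eventually_at_right_field using r B by (auto simp: f_def intro!: exI[of _ r])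
        hence l2: "(f \<longlongrightarrow> 0) (at_right 0)" by (rule tendsto_eventually)
        from tendsto_unique[OF _ l1 l2] show "u 0 = 0" by simp
      qed
      thus ?thesis using Suc.prems by blast
    qed
    finally have "(\<Sum>n. u (Suc n) * y ^ n) * y = 0" by simp
    thus "(\<Sum>n. u (Suc n) * y ^ n) = 0" using y by simp
  qed
  thus ?case by simp
qed

lemma euler_small:
  fixes a b c y :: real
  assumes c: "c > 0" and y: "0 \<le> y" "y < 1/2"
  shows "Sr a b c y = (1 - y) powr (c - a - b) * Sr (c - a) (c - b) c y"
proof -
  define z where "z = y / (y - 1)"
  have ym1: "y - 1 < 0" using y by simp
  have z1: "-1 < z" using y ym1 by (simp add: z_def less_divide_eq)
  have z0: "z \<le> 0" using y ym1 by (simp add: z_def divide_nonneg_neg)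
  have zy: "z / (z - 1) = y" using ym1 by (simp add: z_def field_simps)
  have omz: "1 - z = 1 / (1 - y)" using ym1 by (simp add: z_def field_simps)
  have omz_pos: "1 - z > 0" using z0 by simp
  have p1: "Sr (c - a) b c z = (1 - z) powr (-b) * Sr a b c y"
    using pfaff[OF c z1 z0, of "c - a" b] by (simp add: zy)
  have p2: "Sr (c - a) b c z = (1 - z) powr (a - c) * Sr (c - a) (c - b) c y"
    using pfaff[OF c z1 z0, of b "c - a"] by (simp add: zy Sr_sym[of b] Sr_sym[of "c - b"])
  have "Sr a b c y = (1 - z) powr b * ((1 - z) powr (-b) * Sr a b c y)"
    using omz_pos by (simp add: powr_minus field_simps)
  also have "\<dots> = (1 - z) powr b * ((1 - z) powr (a - c) * Sr (c - a) (c - b) c y)" using p1 p2 by simp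
  also have "\<dots> = (1 - z) powr (a + b - c) * Sr (c - a) (c - b) c y"
    by (simp add: powr_add[symmetric] algebra_simps)
  also have "(1 - z) powr (a + b - c) = (1 - y) powr (c - a - b)"
  proof -
    have h1: "(1 - y) powr (c - a - b) = 1 / (1 - y) powr (a + b - c)"
    proof -
      have "c - a - b = - (a + b - c)" by simp
      thus ?thesis by (simp only: powr_minus_divide)
    qed
    have h2: "(1 - z) powr (a + b - c) = 1 / (1 - y) powr (a + b - c)"
      using ym1 by (simp add: omz powr_divide)
    show ?thesis using h1 h2 by simp
  qed
  finally show ?thesis .
qed


lemma euler:
  fixes a b c y :: real
  assumes c: "c > 0" and y: "0 \<le> y" "y < 1"
  shows "Sr a b c y = (1 - y) powr (c - a - b) * Sr (c - a) (c - b) c y"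
proof -
  define e where "e = a + b - c"
  have me: "- e = c - a - b" by (simp add: e_def)
  define \<beta> where "\<beta> i = pochhammer e i / fact i" for i
  define f' where "f' k = hg_coef (c - a) (c - b) c k" for k
  define E where "E N = (\<Sum>i\<le>N. \<beta> i * f' (N - i))" for N
  have RHS: "(\<lambda>N. E N * t ^ N) sums ((1 - t) powr (c - a - b) * Sr (c - a) (c - b) c t)" if t: "\<bar>t\<bar> < 1" for t
  proof -
    have s1: "summable (\<lambda>i. norm (\<beta> i * t ^ i))"
    proof (rule summable_comparison_test)
      show "\<exists>N. \<forall>n\<ge>N. norm (norm (\<beta> n * t ^ n)) \<le> pochhammer \<bar>e\<bar> n / fact n * \<bar>t\<bar> ^ n"
      proof (intro exI allI impI)
        fix n :: nat
        have "norm (norm (\<beta> n * t ^ n)) = \<bar>pochhammer e n\<bar> / fact n * \<bar>t\<bar> ^ n"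
          by (simp add: \<beta>_def abs_mult power_abs)
        also have "\<dots> \<le> pochhammer \<bar>e\<bar> n / fact n * \<bar>t\<bar> ^ n"
          by (intro mult_right_mono divide_right_mono abs_poch_le) auto
        finally show "norm (norm (\<beta> n * t ^ n)) \<le> pochhammer \<bar>e\<bar> n / fact n * \<bar>t\<bar> ^ n" .
      qed
      show "summable (\<lambda>n. pochhammer \<bar>e\<bar> n / fact n * \<bar>t\<bar> ^ n)"
        using binom_series[of "\<bar>t\<bar>" "\<bar>e\<bar>"] t by (simp add: sums_iff)
    qed
    have s2: "summable (\<lambda>k. norm (f' k * t ^ k))"
      using hg_summable_abs[OF c t, of "c - a" "c - b"] by (simp add: f'_def)
    from Cauchy_product_sums[OF s1 s2]
    have "(\<lambda>k. \<Sum>i\<le>k. \<beta> i * t ^ i * (f' (k - i) * t ^ (k - i))) sums ((\<Sum>k. \<beta> k * t ^ k) * (\<Sum>k. f' k * t ^ k))" .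
    moreover have "(\<Sum>k. \<beta> k * t ^ k) = (1 - t) powr (c - a - b)"
      using binom_series[OF t, of e] by (simp add: \<beta>_def sums_iff me)
    moreover have "(\<Sum>k. f' k * t ^ k) = Sr (c - a) (c - b) c t" by (simp add: f'_def Sr_def)
    moreover have "(\<Sum>i\<le>k. \<beta> i * t ^ i * (f' (k - i) * t ^ (k - i))) = E k * t ^ k" for k
    proof -
      have "(\<Sum>i\<le>k. \<beta> i * t ^ i * (f' (k - i) * t ^ (k - i))) = (\<Sum>i\<le>k. \<beta> i * f' (k - i) * t ^ k)"
      proof (intro sum.cong refl)
        fix i assume "i \<in> {..k}"
        hence "t ^ i * t ^ (k - i) = t ^ k" by (simp flip: power_add)
        thus "\<beta> i * t ^ i * (f' (k - i) * t ^ (k - i)) = \<beta> i * f' (k - i) * t ^ k"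
          by (metis (no_types, lifting) mult.assoc mult.left_commute)
      qed
      thus ?thesis by (simp add: E_def sum_distrib_right)
    qed
    ultimately show ?thesis by simp
  qed
  define u where "u N = hg_coef a b c N - E N" for N
  have u0: "u N = 0" for N
  proof (rule powser_unique_right[of "1/2"])
    fix t :: real assume t: "\<bar>t\<bar> < 1/2"
    hence t1: "\<bar>t\<bar> < 1" by simp
    have "(\<lambda>n. u n * t ^ n) sums (Sr a b c t - (1 - t) powr (c - a - b) * Sr (c - a) (c - b) c t)"
      unfolding u_def left_diff_distrib by (intro sums_diff hg_sums[OF c t1] RHS[OF t1])
    thus "summable (\<lambda>n. u n * t ^ n)" by (simp add: sums_iff)
  next
    fix t :: real assume t: "0 < t" "t < 1/2"
    hence t1: "\<bar>t\<bar> < 1" by simp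
    have "(\<lambda>n. u n * t ^ n) sums (Sr a b c t - (1 - t) powr (c - a - b) * Sr (c - a) (c - b) c t)"
      unfolding u_def left_diff_distrib by (intro sums_diff hg_sums[OF c t1] RHS[OF t1])
    moreover have "Sr a b c t - (1 - t) powr (c - a - b) * Sr (c - a) (c - b) c t = 0"
      using euler_small[OF c, of t a b] t by simp
    ultimately show "(\<Sum>n. u n * t ^ n) = 0" by (simp add: sums_iff)
  qed simp
  have ay: "\<bar>y\<bar> < 1" using y by simp
  have "(\<lambda>N. hg_coef a b c N * y ^ N) sums ((1 - y) powr (c - a - b) * Sr (c - a) (c - b) c y)"
    using RHS[OF ay] u0 by (simp add: u_def)
  moreover have "(\<lambda>N. hg_coef a b c N * y ^ N) sums Sr a b c y" by (rule hg_sums[OF c ay])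
  ultimately show ?thesis using sums_unique2 by blast
qed


lemma prod_has_sum:
  fixes f g :: "nat \<Rightarrow> real"
  assumes f0: "\<And>k. f k \<ge> 0" and g0: "\<And>j. g j \<ge> 0" and fs: "f sums A" and gs: "g sums B"
  shows "((\<lambda>(k,j). f k * g j) has_sum (A * B)) UNIV"
proof -
  have rows: "(\<lambda>j. f k * g j) sums (f k * B)" for k by (rule sums_mult[OF gs])
  have sr: "(\<lambda>k. f k * B) sums (A * B)" by (rule sums_mult2[OF fs])
  have S: "(\<lambda>(k,j). f k * g j) summable_on UNIV"
    by (rule pair_summable_nonneg[OF _ rows]) (use f0 g0 sr in \<open>auto simp: sums_iff\<close>)
  have "(\<lambda>k. \<Sum>j. f k * g j) sums infsum (\<lambda>(k,j). f k * g j) UNIV" by (rule double_sum(1)[OF S])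
  moreover have "(\<Sum>j. f k * g j) = f k * B" for k using rows[of k] by (simp add: sums_iff)
  ultimately have "(\<lambda>k. f k * B) sums infsum (\<lambda>(k,j). f k * g j) UNIV" by simp
  hence "infsum (\<lambda>(k,j). f k * g j) UNIV = A * B" using sr sums_unique2 by blast
  thus ?thesis using has_sum_infsum[OF S] by simp
qed

definition mG :: "real \<Rightarrow> real \<Rightarrow> real" where "mG d u = Gamma (u + d) / Gamma u"

lemma mG_pos: "0 < u \<Longrightarrow> 0 < d \<Longrightarrow> mG d u > 0"
  by (simp add: mG_def)

lemma mG_mono:
  assumes d: "0 < d" and u: "0 < u" "u < v"
  shows "mG d u < mG d v"
proof -
  define \<phi> where "\<phi> x = ln_Gamma (x + d) - ln_Gamma x" for x :: real
  have "\<phi> u < \<phi> v"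
  proof (rule DERIV_pos_imp_increasing[OF u(2)])
    fix x assume x: "u \<le> x" "x \<le> v"
    hence x0: "x > 0" using u by simp
    have "DERIV \<phi> x :> (Digamma (x + d) - Digamma x)"
      unfolding \<phi>_def using x0 d
      by (auto intro!: derivative_eq_intros has_field_derivative_ln_Gamma_real)
    moreover have "Digamma (x + d) - Digamma x > 0" using Digamma_real_strict_mono[of x "x + d"] x0 d by simp
    ultimately show "\<exists>y. DERIV \<phi> x :> y \<and> y > 0" by blast
  qed
  moreover have "mG d x = exp (\<phi> x)" if "x > 0" for x
    using that d by (simp add: mG_def \<phi>_def Gamma_real_pos_exp exp_diff)
  ultimately show ?thesis using u by simp
qed

lemma poch_shift_mG:
  assumes a: "a > 0" and d: "d > 0"
  shows "pochhammer (a + d) k = pochhammer a k * mG d (a + k) / mG d a"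
proof -
  have na: "a \<notin> \<int>\<^sub>\<le>\<^sub>0" using a by (auto dest: nonpos_Ints_nonpos)
  have nad: "a + d \<notin> \<int>\<^sub>\<le>\<^sub>0" using a d by (auto dest: nonpos_Ints_nonpos)
  have g: "Gamma a > 0" "Gamma (a + d) > 0" "Gamma (a + k) > 0" "Gamma (a + k + d) > 0"
    using a d by simp_all
  show ?thesis
    unfolding pochhammer_Gamma[OF na] pochhammer_Gamma[OF nad] mG_def
    using g by (simp add: field_simps add_ac)
qed

lemma poch_ratio:
  fixes a a' :: real
  assumes "0 < a" "a \<le> a'" "k \<le> j"
  shows "pochhammer a' k * pochhammer a j \<le> pochhammer a' j * pochhammer a k"
proof -
  have e1: "pochhammer a j = pochhammer a k * pochhammer (a + k) (j - k)"
    using pochhammer_product[OF assms(3), of a] by simp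
  have e2: "pochhammer a' j = pochhammer a' k * pochhammer (a' + k) (j - k)"
    using pochhammer_product[OF assms(3), of a'] by simp
  have "pochhammer (a + k) (j - k) \<le> pochhammer (a' + k) (j - k)"
    using assms by (intro poch_mono) auto
  moreover have "pochhammer a' k * pochhammer a k \<ge> 0" using assms by (simp add: poch_nonneg)
  ultimately have "(pochhammer a' k * pochhammer a k) * pochhammer (a + k) (j - k)
      \<le> (pochhammer a' k * pochhammer a k) * pochhammer (a' + k) (j - k)"
    by (rule mult_left_mono)
  thus ?thesis unfolding e1 e2 by (simp add: mult_ac)
qed

lemma hg_pos: "0 < a \<Longrightarrow> 0 < b \<Longrightarrow> 0 < c \<Longrightarrow> hg_coef a b c k > 0"
  by (simp add: hg_coef_def poch_pos)

lemma hg_nonneg: "0 \<le> a \<Longrightarrow> 0 < b \<Longrightarrow> 0 < c \<Longrightarrow> hg_coef a b c k \<ge> 0"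
  by (simp add: hg_coef_def poch_pos poch_nonneg)


lemma V_nonneg_aux:
  fixes W1 W2 :: "nat \<Rightarrow> real" and m :: "real \<Rightarrow> real" and a a' :: real
  assumes m: "\<And>u v. 0 < u \<Longrightarrow> u < v \<Longrightarrow> m u < m v"
    and a: "0 < a" "a < a'" and kj: "k \<le> j"
    and W: "\<And>i. W1 i > 0" "\<And>i. W2 i > 0"
    and r: "W1 k * W2 j \<le> W1 j * W2 k"
  shows "0 \<le> (W1 k * m (a' + k) * W2 j - W2 k * m (a + k) * W1 j)
            + (W1 j * m (a' + j) * W2 k - W2 j * m (a + j) * W1 k)"
proof -
  define U1 where "U1 = W1 k * W2 j"
  define U2 where "U2 = W1 j * W2 k"
  have U1: "U1 \<ge> 0" using W by (simp add: U1_def less_imp_le)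
  have U12: "U1 \<le> U2" using r by (simp add: U1_def U2_def)
  have m1: "m (a + k) < m (a' + k)" using m a by simp
  have m2: "m (a + j) < m (a' + j)" using m a by simp
  have m3: "m (a + k) < m (a' + j)" using m a kj by simp
  have "(W1 k * m (a' + k) * W2 j - W2 k * m (a + k) * W1 j) + (W1 j * m (a' + j) * W2 k - W2 j * m (a + j) * W1 k)
      = U1 * ((m (a' + k) - m (a + k)) + (m (a' + j) - m (a + j))) + (U2 - U1) * (m (a' + j) - m (a + k))"
    by (simp add: U1_def U2_def algebra_simps)
  moreover have "U1 * ((m (a' + k) - m (a + k)) + (m (a' + j) - m (a + j))) \<ge> 0" using U1 m1 m2 by simp
  moreover have "(U2 - U1) * (m (a' + j) - m (a + k)) \<ge> 0" using U12 m3 by simp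
  ultimately show ?thesis by linarith
qed

lemma lower_core:
  fixes a a' b c y d :: real
  assumes bc: "c < b" "0 < c" and y: "0 < y" "y < 1" and a: "0 < a" "a < a'" and d: "0 < d"
  shows "mG d a / mG d a' * (Sr (a + d) b c y * Sr a' b c y) < Sr (a' + d) b c y * Sr a b c y"
proof -
  have ay: "\<bar>y\<bar> < 1" using y by simp
  have b0: "b > 0" using bc by simp
  have a'0: "a' > 0" using a by simp
  define w where "w \<alpha> k = hg_coef \<alpha> b c k * y ^ k" for \<alpha> k
  have wpos: "w \<alpha> k > 0" if "\<alpha> > 0" for \<alpha> k using hg_pos[OF that b0 bc(2)] y by (simp add: w_def)
  have ws: "w \<alpha> sums Sr \<alpha> b c y" for \<alpha> unfolding w_def by (rule hg_sums[OF bc(2) ay])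
  have Us: "(\<lambda>k. w \<alpha> k * mG d (\<alpha> + k)) sums (mG d \<alpha> * Sr (\<alpha> + d) b c y)" if "\<alpha> > 0" for \<alpha>
  proof -
    have mp: "mG d \<alpha> > 0" using that d by (rule mG_pos)
    have "w \<alpha> k * mG d (\<alpha> + k) = mG d \<alpha> * (hg_coef (\<alpha> + d) b c k * y ^ k)" for k
      unfolding w_def hg_coef_def poch_shift_mG[OF that d] using mp by (simp add: field_simps)
    thus ?thesis using sums_mult[OF hg_sums[OF bc(2) ay, of "\<alpha> + d" b], of "mG d \<alpha>"] by simp
  qed
  define F1 where "F1 k = w a' k * mG d (a' + k)" for k
  define F2 where "F2 k = w a k * mG d (a + k)" for k
  define A1 where "A1 = mG d a' * Sr (a' + d) b c y"
  define A2 where "A2 = mG d a * Sr (a + d) b c y"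
  have mGp: "mG d u > 0" if "u > 0" for u using that d by (rule mG_pos)
  have F1p: "F1 k \<ge> 0" for k unfolding F1_def
    by (intro mult_nonneg_nonneg less_imp_le wpos mGp) (use a'0 in simp_all)
  have F2p: "F2 k \<ge> 0" for k unfolding F2_def
    by (intro mult_nonneg_nonneg less_imp_le wpos mGp) (use a in simp_all)
  have hP: "((\<lambda>(k,j). F1 k * w a j) has_sum (A1 * Sr a b c y)) UNIV"
    by (rule prod_has_sum[OF F1p _ _ ws]) (use wpos[OF a(1)] Us[OF a'0] in \<open>auto simp: F1_def A1_def less_imp_le\<close>)
  have hN: "((\<lambda>(k,j). F2 k * w a' j) has_sum (A2 * Sr a' b c y)) UNIV"
    by (rule prod_has_sum[OF F2p _ _ ws]) (use wpos[OF a'0] Us[OF a(1)] in \<open>auto simp: F2_def A2_def less_imp_le\<close>)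
  define Q where "Q p = (case p of (k, j) \<Rightarrow> F1 k * w a j - F2 k * w a' j)" for p
  define D where "D = A1 * Sr a b c y - A2 * Sr a' b c y"
  have hQ: "(Q has_sum D) UNIV"
  proof -
    have "((\<lambda>p. (\<lambda>(k,j). F1 k * w a j) p + - (\<lambda>(k,j). F2 k * w a' j) p) has_sum (A1 * Sr a b c y + - (A2 * Sr a' b c y))) UNIV"
      by (intro has_sum_add hP) (simp add: has_sum_uminus hN)
    moreover have "Q = (\<lambda>p. F1 (fst p) * w a (snd p) - F2 (fst p) * w a' (snd p))"
      by (simp add: fun_eq_iff Q_def case_prod_unfold)
    ultimately show ?thesis by (simp add: D_def case_prod_unfold)
  qed
  define sw :: "nat \<times> nat \<Rightarrow> nat \<times> nat" where "sw p = (snd p, fst p)" for p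
  have bij: "bij_betw sw UNIV UNIV" by (rule bij_betwI[where g=sw]) (auto simp: sw_def)
  have hQs: "((\<lambda>p. Q (sw p)) has_sum D) UNIV" using has_sum_reindex_bij_betw[OF bij, of Q D] hQ by simp
  define V where "V p = Q p + Q (sw p)" for p
  have hV: "(V has_sum (D + D)) UNIV" unfolding V_def by (rule has_sum_add[OF hQ hQs])
  have Vnn: "V p \<ge> 0" for p
  proof -
    obtain k j where p: "p = (k, j)" by (cases p)
    define W1 where "W1 i = w a' i" for i
    define W2 where "W2 i = w a i" for i
    have W: "\<And>i. W1 i > 0" "\<And>i. W2 i > 0" using wpos a a'0 by (auto simp: W1_def W2_def)
    have rat: "W1 k * W2 j \<le> W1 j * W2 k" if "k \<le> j" for k j
    proof -
      define G where "G i = pochhammer b i / (pochhammer c i * fact i) * y ^ i" for i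
      have G0: "G i \<ge> 0" for i unfolding G_def
        by (intro mult_nonneg_nonneg divide_nonneg_pos less_imp_le poch_pos mult_pos_pos zero_le_power)
           (use b0 bc y in simp_all)
      have w': "w \<alpha> i = pochhammer \<alpha> i * G i" for \<alpha> i by (simp add: w_def hg_coef_def G_def)
      have "W1 k * W2 j = (pochhammer a' k * pochhammer a j) * (G k * G j)" by (simp add: W1_def W2_def w')
      also have "\<dots> \<le> (pochhammer a' j * pochhammer a k) * (G k * G j)"
        using poch_ratio[OF a(1) _ that, of a'] a G0 by (intro mult_right_mono) auto
      also have "\<dots> = W1 j * W2 k" by (simp add: W1_def W2_def w')
      finally show ?thesis .
    qed
    have Vkj: "V (k, j) = (W1 k * mG d (a' + k) * W2 j - W2 k * mG d (a + k) * W1 j)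
            + (W1 j * mG d (a' + j) * W2 k - W2 j * mG d (a + j) * W1 k)"
      by (simp add: V_def Q_def sw_def F1_def F2_def W1_def W2_def)
    have mono: "\<And>u v. 0 < u \<Longrightarrow> u < v \<Longrightarrow> mG d u < mG d v" using mG_mono[OF d] by blast
    show ?thesis
    proof (cases "k \<le> j")
      case True
      show ?thesis unfolding p Vkj by (rule V_nonneg_aux[OF mono a True W rat[OF True]])
    next
      case False
      hence jk: "j \<le> k" by simp
      have "0 \<le> (W1 j * mG d (a' + j) * W2 k - W2 j * mG d (a + j) * W1 k)
            + (W1 k * mG d (a' + k) * W2 j - W2 k * mG d (a + k) * W1 j)"
        by (rule V_nonneg_aux[OF mono a jk W rat[OF jk]])
      thus ?thesis unfolding p Vkj by simp
    qed
  qed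
  have V00: "V (0, 0) = 2 * (mG d a' - mG d a)"
    by (simp add: V_def Q_def sw_def F1_def F2_def w_def)
  have "V (0, 0) > 0" using mG_mono[OF d a] by (simp add: V00)
  moreover have "sum V {(0, 0)} \<le> D + D"
    by (rule finite_sum_le_has_sum[OF hV]) (auto simp: Vnn)
  ultimately have Dpos: "D > 0" by simp
  have mpa: "mG d a' > 0" using mGp a'0 by simp
  have "mG d a' * (mG d a / mG d a' * (Sr (a + d) b c y * Sr a' b c y)) = A2 * Sr a' b c y"
    using mpa by (simp add: A2_def)
  also have "\<dots> < A1 * Sr a b c y" using Dpos by (simp add: D_def)
  also have "\<dots> = mG d a' * (Sr (a' + d) b c y * Sr a b c y)" by (simp add: A1_def)
  finally have "mG d a' * (mG d a / mG d a' * (Sr (a + d) b c y * Sr a' b c y)) < mG d a' * (Sr (a' + d) b c y * Sr a b c y)" .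
  thus ?thesis using mpa by (simp only: mult_less_cancel_left_pos)
qed


lemma Sr_pos:
  assumes "0 < c" "0 < b" "0 \<le> \<alpha>" "0 \<le> y" "y < 1"
  shows "Sr \<alpha> b c y > 0"
proof -
  have ay: "\<bar>y\<bar> < 1" using assms by simp
  have s: "summable (\<lambda>k. hg_coef \<alpha> b c k * y ^ k)" using hg_sums[OF assms(1) ay] by (simp add: sums_iff)
  have "sum (\<lambda>k. hg_coef \<alpha> b c k * y ^ k) {..<1} \<le> Sr \<alpha> b c y"
    unfolding Sr_def by (rule sum_le_suminf[OF s]) (use assms hg_nonneg in auto)
  thus ?thesis by simp
qed

lemma cauchy_hg:
  assumes c: "c > 0" and x: "\<bar>x\<bar> < 1"
  shows "(\<lambda>n. (\<Sum>k\<le>n. hg_coef \<alpha> b c k * hg_coef \<beta> b c (n - k)) * x ^ n) sums (Sr \<alpha> b c x * Sr \<beta> b c x)"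
proof -
  have s1: "summable (\<lambda>k. norm (hg_coef \<alpha> b c k * x ^ k))" using hg_summable_abs[OF c x] by simp
  have s2: "summable (\<lambda>k. norm (hg_coef \<beta> b c k * x ^ k))" using hg_summable_abs[OF c x] by simp
  from Cauchy_product_sums[OF s1 s2]
  have "(\<lambda>n. \<Sum>k\<le>n. hg_coef \<alpha> b c k * x ^ k * (hg_coef \<beta> b c (n - k) * x ^ (n - k))) sums (Sr \<alpha> b c x * Sr \<beta> b c x)"
    by (simp add: Sr_def)
  moreover have "(\<Sum>k\<le>n. hg_coef \<alpha> b c k * x ^ k * (hg_coef \<beta> b c (n - k) * x ^ (n - k)))
     = (\<Sum>k\<le>n. hg_coef \<alpha> b c k * hg_coef \<beta> b c (n - k)) * x ^ n" for n
  proof -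
    have "(\<Sum>k\<le>n. hg_coef \<alpha> b c k * x ^ k * (hg_coef \<beta> b c (n - k) * x ^ (n - k)))
       = (\<Sum>k\<le>n. hg_coef \<alpha> b c k * hg_coef \<beta> b c (n - k) * x ^ n)"
    proof (intro sum.cong refl)
      fix k assume "k \<in> {..n}"
      hence "x ^ k * x ^ (n - k) = x ^ n" by (simp flip: power_add)
      thus "hg_coef \<alpha> b c k * x ^ k * (hg_coef \<beta> b c (n - k) * x ^ (n - k)) = hg_coef \<alpha> b c k * hg_coef \<beta> b c (n - k) * x ^ n"
        by (metis (no_types, lifting) mult.assoc mult.left_commute)
    qed
    thus ?thesis by (simp add: sum_distrib_right)
  qed
  ultimately show ?thesis by simp
qed

definition dco :: "real \<Rightarrow> real \<Rightarrow> real \<Rightarrow> real \<Rightarrow> real \<Rightarrow> nat \<Rightarrow> real" where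
  "dco a a' b c \<delta> n = (\<Sum>k\<le>n. hg_coef (a + \<delta>) b c k * hg_coef a' b c (n - k) - hg_coef (a' + \<delta>) b c k * hg_coef a b c (n - k))"

lemma dco_sums:
  assumes c: "c > 0" and x: "\<bar>x\<bar> < 1"
  shows "(\<lambda>n. dco a a' b c \<delta> n * x ^ n) sums (Sr (a + \<delta>) b c x * Sr a' b c x - Sr (a' + \<delta>) b c x * Sr a b c x)"
proof -
  have "(\<lambda>n. (\<Sum>k\<le>n. hg_coef (a + \<delta>) b c k * hg_coef a' b c (n - k)) * x ^ n
           - (\<Sum>k\<le>n. hg_coef (a' + \<delta>) b c k * hg_coef a b c (n - k)) * x ^ n)
        sums (Sr (a + \<delta>) b c x * Sr a' b c x - Sr (a' + \<delta>) b c x * Sr a b c x)"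
    by (intro sums_diff cauchy_hg c x)
  thus ?thesis by (simp add: dco_def sum_subtractf left_diff_distrib)
qed

lemma dco_0: "dco a a' b c \<delta> 0 = 0"
   by (simp add: dco_def hg_coef_def)

lemma dco_1: "c > 0 \<Longrightarrow> dco a a' b c \<delta> 1 = 0"
   by (simp add: dco_def hg_coef_def field_simps)

lemma core_a:
  assumes bc: "c < b" "0 < c" and y: "0 < y" "y < 1" and a: "0 \<le> a" "a < a'" and d: "0 < \<delta>"
  shows "Sr (a' + \<delta>) b c y * Sr a b c y < Sr (a + \<delta>) b c y * Sr a' b c y"
proof -
  have ay: "\<bar>y\<bar> < 1" using y by simp
  note s = dco_sums[OF bc(2) ay, of a a' b \<delta>]
  have dpos: "dco a a' b c \<delta> n > 0" if "2 \<le> n" for n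
    unfolding dco_def by (rule partA[OF a d bc that])
  have dnn: "dco a a' b c \<delta> n * y ^ n \<ge> 0" for n
  proof (cases "2 \<le> n")
    case True thus ?thesis using dpos[OF True] y by simp
  next
    case False
    hence "n = 0 \<or> n = 1" by auto
    thus ?thesis using dco_0[of a a' b c \<delta>] dco_1[of c a a' b \<delta>] bc by auto
  qed
  have "sum (\<lambda>n. dco a a' b c \<delta> n * y ^ n) {..<3} \<le> Sr (a + \<delta>) b c y * Sr a' b c y - Sr (a' + \<delta>) b c y * Sr a b c y"
  proof -
    have "sum (\<lambda>n. dco a a' b c \<delta> n * y ^ n) {..<3} \<le> (\<Sum>n. dco a a' b c \<delta> n * y ^ n)"
      by (rule sum_le_suminf[OF sums_summable[OF s]]) (use dnn in auto)
    thus ?thesis using s by (simp add: sums_iff)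
  qed
  moreover have "sum (\<lambda>n. dco a a' b c \<delta> n * y ^ n) {..<3} = dco a a' b c \<delta> 2 * y ^ 2"
    using dco_0[of a a' b c \<delta>] dco_1[of c a a' b \<delta>] bc by (simp add: numeral_3_eq_3 numeral_2_eq_2 lessThan_Suc power2_eq_square)
  moreover have "dco a a' b c \<delta> 2 * y ^ 2 > 0" using dpos[of 2] y by simp
  ultimately show ?thesis by simp
qed

lemma core_lc:
  assumes bc: "c < b" "0 < c" and y: "0 < y" "y < 1" and a: "0 \<le> a" and d: "0 < \<delta>"
  shows "Sr a b c y * Sr (a + 2 * \<delta>) b c y \<le> Sr (a + \<delta>) b c y ^ 2"
proof -
  have "Sr (a + \<delta> + \<delta>) b c y * Sr a b c y < Sr (a + \<delta>) b c y * Sr (a + \<delta>) b c y"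
    using core_a[OF bc y a, of "a + \<delta>" \<delta>] d by simp
  moreover have "a + \<delta> + \<delta> = a + 2 * \<delta>" by simp
  ultimately show ?thesis by (simp add: power2_eq_square mult.commute)
qed

lemma core_star:
  assumes bc: "c < b" "0 < c" and y: "0 < y" "y < 1" and a: "0 < a" "a < a'" and d: "0 < \<delta>"
  shows "Gamma (a + \<delta>) * Gamma a' / (Gamma a * Gamma (a' + \<delta>)) <
           (Sr (a' + \<delta>) b c y * Sr a b c y) / (Sr (a + \<delta>) b c y * Sr a' b c y)
         \<and> (Sr (a' + \<delta>) b c y * Sr a b c y) / (Sr (a + \<delta>) b c y * Sr a' b c y) < 1"
proof -
  have b0: "b > 0" using bc by simp
  have den: "Sr (a + \<delta>) b c y * Sr a' b c y > 0"
    using Sr_pos[OF bc(2) b0, of "a + \<delta>" y] Sr_pos[OF bc(2) b0, of a' y] a d y by simp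
  have r1: "Sr (a' + \<delta>) b c y * Sr a b c y < Sr (a + \<delta>) b c y * Sr a' b c y"
    by (rule core_a[OF bc y _ a(2) d]) (use a in simp)
  have L: "Gamma (a + \<delta>) * Gamma a' / (Gamma a * Gamma (a' + \<delta>)) = mG \<delta> a / mG \<delta> a'"
    using a d by (simp add: mG_def field_simps)
  have r2: "mG \<delta> a / mG \<delta> a' * (Sr (a + \<delta>) b c y * Sr a' b c y) < Sr (a' + \<delta>) b c y * Sr a b c y"
    by (rule lower_core[OF bc y a d])
  show ?thesis
    using r1 r2 den unfolding L by (simp add: divide_less_eq less_divide_eq)
qed


lemma HN:
  assumes c: "c > 0" and x: "x < 0"
  shows "hyp2f1 \<alpha> b c x = (1 - x) powr (-b) * Sr (c - \<alpha>) b c (x / (x - 1))"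
proof (cases "x \<le> -1")
  case True thus ?thesis by (rule hyp2f1_le_m1)
next
  case False
  hence "-1 < x" by simp
  thus ?thesis using pfaff[OF c, of x \<alpha> b] x hyp2f1_series[of x \<alpha> b c] by simp
qed

lemma y_props:
  assumes "x < (0::real)"
  shows "0 < x / (x - 1)" "x / (x - 1) < 1"
  using assms by (simp_all add: zero_less_divide_iff divide_less_eq)

lemma HNE:
  assumes c: "c > 0" and x: "x < 0"
  shows "hyp2f1 \<alpha> b c x = (1 - x) powr (-b) * ((1 - x / (x - 1)) powr (\<alpha> - b) * Sr \<alpha> (c - b) c (x / (x - 1)))"
proof -
  note y = y_props[OF x]
  have "Sr (c - \<alpha>) b c (x / (x - 1)) = (1 - x / (x - 1)) powr (c - (c - \<alpha>) - b) * Sr (c - (c - \<alpha>)) (c - b) c (x / (x - 1))"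
    by (rule euler[OF c]) (use y in auto)
  thus ?thesis using HN[OF c x, of \<alpha> b] by simp
qed

lemma HE:
  assumes c: "c > 0" and x: "0 \<le> x" "x < 1"
  shows "hyp2f1 \<alpha> b c x = (1 - x) powr (c - \<alpha> - b) * Sr (c - \<alpha>) (c - b) c x"
  using hyp2f1_series[of x \<alpha> b c] euler[OF c x, of \<alpha> b] x by simp

lemma lc_transfer:
  fixes k1 k2 k3 G1 G2 G3 :: real
  assumes "G1 * G3 \<le> G2 ^ 2" "k1 * k3 = k2 ^ 2"
  shows "(k1 * G1) * (k3 * G3) \<le> (k2 * G2) ^ 2"
proof -
  have "(k1 * G1) * (k3 * G3) = k2 ^ 2 * (G1 * G3)" using assms(2) by (simp add: mult_ac)
  also have "\<dots> \<le> k2 ^ 2 * G2 ^ 2" using assms(1) by (intro mult_left_mono) auto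
  finally show ?thesis by (simp add: power_mult_distrib)
qed

lemma ratio_transfer:
  fixes k1 k2 k3 k4 g1 g2 g3 g4 :: real
  assumes "k1 * k2 = k3 * k4" "k3 * k4 \<noteq> 0"
  shows "(k1 * g1) * (k2 * g2) / ((k3 * g3) * (k4 * g4)) = g1 * g2 / (g3 * g4)"
proof -
  have "(k1 * g1) * (k2 * g2) / ((k3 * g3) * (k4 * g4)) = ((k3 * k4) * (g1 * g2)) / ((k3 * k4) * (g3 * g4))"
    using assms(1) by (simp add: mult_ac)
  also have "\<dots> = g1 * g2 / (g3 * g4)" using assms(2) by (rule mult_divide_mult_cancel_left)
  finally show ?thesis .
qed

lemma pw2: "e1 + e3 = e2 + e2 \<Longrightarrow> (q::real) powr e1 * q powr e3 = (q powr e2) ^ 2"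
  by (simp add: power2_eq_square powr_add[symmetric])

lemma pw4: "e1 + e2 = e3 + e4 \<Longrightarrow> (q::real) powr e1 * q powr e2 = q powr e3 * q powr e4"
  by (simp add: powr_add[symmetric])

lemma core_starstar:
  assumes bc: "c < b" "0 < c" and y: "0 < y" "y < 1" and a: "a' < c - \<delta>" "a < a'" and d: "0 < \<delta>"
  shows "Gamma (c - a - \<delta>) * Gamma (c - a') / (Gamma (c - a) * Gamma (c - a' - \<delta>)) <
           (Sr (c - (a' + \<delta>)) b c y * Sr (c - a) b c y) / (Sr (c - (a + \<delta>)) b c y * Sr (c - a') b c y)
         \<and> (Sr (c - (a' + \<delta>)) b c y * Sr (c - a) b c y) / (Sr (c - (a + \<delta>)) b c y * Sr (c - a') b c y) < 1"
proof -
  have A: "0 < c - a' - \<delta>" "c - a' - \<delta> < c - a - \<delta>" using a by simp_all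
  from core_star[OF bc y A d]
  have h: "Gamma (c - a' - \<delta> + \<delta>) * Gamma (c - a - \<delta>) / (Gamma (c - a' - \<delta>) * Gamma (c - a - \<delta> + \<delta>)) <
           (Sr (c - a - \<delta> + \<delta>) b c y * Sr (c - a' - \<delta>) b c y) / (Sr (c - a' - \<delta> + \<delta>) b c y * Sr (c - a - \<delta>) b c y)
         \<and> (Sr (c - a - \<delta> + \<delta>) b c y * Sr (c - a' - \<delta>) b c y) / (Sr (c - a' - \<delta> + \<delta>) b c y * Sr (c - a - \<delta>) b c y) < 1" .
  have e: "c - a' - \<delta> + \<delta> = c - a'" "c - a - \<delta> + \<delta> = c - a" "c - (a' + \<delta>) = c - a' - \<delta>" "c - (a + \<delta>) = c - a - \<delta>"
    by simp_all
  show ?thesis using h unfolding e by (simp add: ac_simps)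
qed


lemma partB:
  fixes a b c x \<delta> :: real
  assumes H: "\<delta> > 0 \<and>
      ((a \<ge> 0 \<and> 0 < x \<and> x < 1 \<and> b > c \<and> c > 0) \<or>
       (a \<ge> 0 \<and> x < 0 \<and> c > 0 \<and> 0 > b) \<or>
       (a + 2 * \<delta> \<le> c \<and> 0 < x \<and> x < 1 \<and> c > 0 \<and> 0 > b) \<or>
       (a + 2 * \<delta> \<le> c \<and> x < 0 \<and> b > c \<and> c > 0))"
  shows "hyp2f1 (a + \<delta>) b c x ^ 2 \<ge> hyp2f1 a b c x * hyp2f1 (a + 2 * \<delta>) b c x"
proof -
  have d: "\<delta> > 0" using H by simp
  from H consider
      (c1) "a \<ge> 0" "0 < x" "x < 1" "b > c" "c > 0"
    | (c2) "a \<ge> 0" "x < 0" "c > 0" "0 > b"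
    | (c3) "a + 2 * \<delta> \<le> c" "0 < x" "x < 1" "c > 0" "0 > b"
    | (c4) "a + 2 * \<delta> \<le> c" "x < 0" "b > c" "c > 0"
    by blast
  thus ?thesis
  proof cases
    case c1
    have xm: "x > -1" using c1 by simp
    show ?thesis unfolding hyp2f1_series[OF xm]
      using core_lc[of c b x a \<delta>] c1 d by (simp add: mult.commute)
  next
    case c2
    define y where "y = x / (x - 1)"
    have y: "0 < y" "y < 1" using y_props[OF c2(2)] by (simp_all add: y_def)
    have bc: "c < c - b" "0 < c" using c2 by simp_all
    define C where "C = (1 - x) powr (-b)"
    have F: "hyp2f1 \<alpha> b c x = (C * (1 - y) powr (\<alpha> - b)) * Sr \<alpha> (c - b) c y" for \<alpha>
      using HNE[OF c2(3) c2(2), of \<alpha> b] by (simp add: C_def y_def mult.assoc)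
    have lc: "Sr a (c - b) c y * Sr (a + 2 * \<delta>) (c - b) c y \<le> Sr (a + \<delta>) (c - b) c y ^ 2"
      by (rule core_lc[OF bc y c2(1) d])
    have k: "(C * (1 - y) powr (a - b)) * (C * (1 - y) powr (a + 2 * \<delta> - b)) = (C * (1 - y) powr (a + \<delta> - b)) ^ 2"
    proof -
      have "(1 - y) powr (a - b) * (1 - y) powr (a + 2 * \<delta> - b) = ((1 - y) powr (a + \<delta> - b)) ^ 2"
        by (rule pw2) simp
      thus ?thesis by (simp add: power_mult_distrib power2_eq_square mult_ac)
    qed
    show ?thesis unfolding F using lc_transfer[OF lc k] by simp
  next
    case c3
    have x0: "0 \<le> x" using c3 by simp
    have bc: "c < c - b" "0 < c" using c3 by simp_all
    have F: "hyp2f1 \<alpha> b c x = (1 - x) powr (c - \<alpha> - b) * Sr (c - \<alpha>) (c - b) c x" for \<alpha>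
      by (rule HE[OF c3(4) x0 c3(3)])
    have A: "0 \<le> c - a - 2 * \<delta>" using c3 by simp
    have lc0: "Sr (c - a - 2 * \<delta>) (c - b) c x * Sr (c - a - 2 * \<delta> + 2 * \<delta>) (c - b) c x
          \<le> Sr (c - a - 2 * \<delta> + \<delta>) (c - b) c x ^ 2"
      by (rule core_lc[OF bc _ c3(3) A d]) (use c3 in simp)
    have e: "c - a - 2 * \<delta> + 2 * \<delta> = c - a" "c - a - 2 * \<delta> + \<delta> = c - (a + \<delta>)" "c - a - 2 * \<delta> = c - (a + 2 * \<delta>)"
      by simp_all
    have lc: "Sr (c - a) (c - b) c x * Sr (c - (a + 2 * \<delta>)) (c - b) c x \<le> Sr (c - (a + \<delta>)) (c - b) c x ^ 2"
      using lc0 unfolding e by (simp add: algebra_simps)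
    have k: "(1 - x) powr (c - a - b) * (1 - x) powr (c - (a + 2 * \<delta>) - b) = ((1 - x) powr (c - (a + \<delta>) - b)) ^ 2"
      by (rule pw2) simp
    show ?thesis unfolding F using lc_transfer[OF lc k] by simp
  next
    case c4
    define y where "y = x / (x - 1)"
    have y: "0 < y" "y < 1" using y_props[OF c4(2)] by (simp_all add: y_def)
    have F: "hyp2f1 \<alpha> b c x = (1 - x) powr (-b) * Sr (c - \<alpha>) b c y" for \<alpha>
      using HN[OF c4(4) c4(2), of \<alpha> b] by (simp add: y_def)
    have A: "0 \<le> c - a - 2 * \<delta>" using c4 by simp
    have lc0: "Sr (c - a - 2 * \<delta>) b c y * Sr (c - a - 2 * \<delta> + 2 * \<delta>) b c y
          \<le> Sr (c - a - 2 * \<delta> + \<delta>) b c y ^ 2"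
      by (rule core_lc[OF c4(3) c4(4) y A d])
    have e: "c - a - 2 * \<delta> + 2 * \<delta> = c - a" "c - a - 2 * \<delta> + \<delta> = c - (a + \<delta>)" "c - a - 2 * \<delta> = c - (a + 2 * \<delta>)"
      by simp_all
    have lc: "Sr (c - a) b c y * Sr (c - (a + 2 * \<delta>)) b c y \<le> Sr (c - (a + \<delta>)) b c y ^ 2"
      using lc0 unfolding e by (simp add: algebra_simps)
    have k: "(1 - x) powr (-b) * (1 - x) powr (-b) = ((1 - x) powr (-b)) ^ 2"
      by (simp add: power2_eq_square)
    show ?thesis unfolding F using lc_transfer[OF lc k] by simp
  qed
qed

lemma powr_pos': "(0::real) < q \<Longrightarrow> q powr e \<noteq> 0" by simp

lemma partC1:
  fixes a a' b c x \<delta> :: real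
  assumes d: "\<delta> > 0" and H: "0 < x" "x < 1" "b > c" "c > 0" "a' > a" "a > 0"
  shows "Gamma (a + \<delta>) * Gamma a' / (Gamma a * Gamma (a' + \<delta>)) <
            (hyp2f1 (a' + \<delta>) b c x * hyp2f1 a b c x) / (hyp2f1 (a + \<delta>) b c x * hyp2f1 a' b c x)
         \<and> (hyp2f1 (a' + \<delta>) b c x * hyp2f1 a b c x) / (hyp2f1 (a + \<delta>) b c x * hyp2f1 a' b c x) < 1"
proof -
  have xm: "x > -1" using H by simp
  show ?thesis unfolding hyp2f1_series[OF xm] by (rule core_star[OF H(3,4,1,2,6,5) d])
qed

lemma partC2:
  fixes a a' b c x \<delta> :: real
  assumes d: "\<delta> > 0" and H: "0 < x" "x < 1" "c > 0" "0 > b" "c - \<delta> > a'" "a' > a"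
  shows "Gamma (c - a - \<delta>) * Gamma (c - a') / (Gamma (c - a) * Gamma (c - a' - \<delta>)) <
            (hyp2f1 (a' + \<delta>) b c x * hyp2f1 a b c x) / (hyp2f1 (a + \<delta>) b c x * hyp2f1 a' b c x)
         \<and> (hyp2f1 (a' + \<delta>) b c x * hyp2f1 a b c x) / (hyp2f1 (a + \<delta>) b c x * hyp2f1 a' b c x) < 1"
proof -
  have x0: "0 \<le> x" using H by simp
  have bc: "c < c - b" "0 < c" using H by simp_all
  have F: "hyp2f1 \<alpha> b c x = (1 - x) powr (c - \<alpha> - b) * Sr (c - \<alpha>) (c - b) c x" for \<alpha>
    by (rule HE[OF H(3) x0 H(2)])
  have q: "1 - x > 0" using H by simp
  have k: "(1 - x) powr (c - (a' + \<delta>) - b) * (1 - x) powr (c - a - b) = (1 - x) powr (c - (a + \<delta>) - b) * (1 - x) powr (c - a' - b)"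
    by (rule pw4) simp
  have knz: "(1 - x) powr (c - (a + \<delta>) - b) * (1 - x) powr (c - a' - b) \<noteq> 0" using q by simp
  show ?thesis unfolding F ratio_transfer[OF k knz] by (rule core_starstar[OF bc H(1,2) H(5,6) d])
qed

lemma partC3:
  fixes a a' b c x \<delta> :: real
  assumes d: "\<delta> > 0" and H: "x < 0" "c > 0" "0 > b" "a' > a" "a > 0"
  shows "Gamma (a + \<delta>) * Gamma a' / (Gamma a * Gamma (a' + \<delta>)) <
            (hyp2f1 (a' + \<delta>) b c x * hyp2f1 a b c x) / (hyp2f1 (a + \<delta>) b c x * hyp2f1 a' b c x)
         \<and> (hyp2f1 (a' + \<delta>) b c x * hyp2f1 a b c x) / (hyp2f1 (a + \<delta>) b c x * hyp2f1 a' b c x) < 1"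
proof -
  define y where "y = x / (x - 1)"
  have y: "0 < y" "y < 1" using y_props[OF H(1)] by (simp_all add: y_def)
  have bc: "c < c - b" "0 < c" using H by simp_all
  define C where "C = (1 - x) powr (-b)"
  have F: "hyp2f1 \<alpha> b c x = (C * (1 - y) powr (\<alpha> - b)) * Sr \<alpha> (c - b) c y" for \<alpha>
    using HNE[OF H(2) H(1), of \<alpha> b] by (simp add: C_def y_def mult.assoc)
  have Cnz: "C \<noteq> 0" using H by (simp add: C_def)
  have q: "1 - y > 0" using y by simp
  have k0: "(1 - y) powr (a' + \<delta> - b) * (1 - y) powr (a - b) = (1 - y) powr (a + \<delta> - b) * (1 - y) powr (a' - b)"
    by (rule pw4) simp
  have k: "(C * (1 - y) powr (a' + \<delta> - b)) * (C * (1 - y) powr (a - b)) = (C * (1 - y) powr (a + \<delta> - b)) * (C * (1 - y) powr (a' - b))"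
    using k0 by (simp add: mult_ac)
  have knz: "(C * (1 - y) powr (a + \<delta> - b)) * (C * (1 - y) powr (a' - b)) \<noteq> 0" using q Cnz by simp
  show ?thesis unfolding F ratio_transfer[OF k knz] by (rule core_star[OF bc y H(5,4) d])
qed

lemma partC4:
  fixes a a' b c x \<delta> :: real
  assumes d: "\<delta> > 0" and H: "x < 0" "b > c" "c > 0" "c - \<delta> > a'" "a' > a"
  shows "Gamma (c - a - \<delta>) * Gamma (c - a') / (Gamma (c - a) * Gamma (c - a' - \<delta>)) <
            (hyp2f1 (a' + \<delta>) b c x * hyp2f1 a b c x) / (hyp2f1 (a + \<delta>) b c x * hyp2f1 a' b c x)
         \<and> (hyp2f1 (a' + \<delta>) b c x * hyp2f1 a b c x) / (hyp2f1 (a + \<delta>) b c x * hyp2f1 a' b c x) < 1"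
proof -
  define y where "y = x / (x - 1)"
  have y: "0 < y" "y < 1" using y_props[OF H(1)] by (simp_all add: y_def)
  define C where "C = (1 - x) powr (-b)"
  have F: "hyp2f1 \<alpha> b c x = C * Sr (c - \<alpha>) b c y" for \<alpha>
    using HN[OF H(3) H(1), of \<alpha> b] by (simp add: C_def y_def)
  have Cnz: "C \<noteq> 0" using H by (simp add: C_def)
  have k: "C * C = C * C" ..
  have knz: "C * C \<noteq> 0" using Cnz by simp
  show ?thesis unfolding F ratio_transfer[OF k knz] by (rule core_starstar[OF H(2,3) y H(4,5) d])
qed


theorem theorem6:
  shows
  \<comment> \<open>(a)\<close>
  "(\<forall>a a' b c \<delta> :: real. a' > a \<and> a \<ge> 0 \<and> b > c \<and> c > 0 \<and> \<delta> > 0 \<longrightarrow>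
      (\<exists>d :: nat \<Rightarrow> real.
         (\<forall>x::real. \<bar>x\<bar> < 1 \<longrightarrow>
            (\<lambda>n. d n * x ^ n) sums
              (hyp2f1 (a + \<delta>) b c x * hyp2f1 a' b c x - hyp2f1 (a' + \<delta>) b c x * hyp2f1 a b c x))
         \<and> d 0 = 0 \<and> d 1 = 0 \<and> (\<forall>n\<ge>2. d n > 0)))
   \<and>
  \<comment> \<open>(b)\<close>
   (\<forall>a b c x \<delta> :: real. \<delta> > 0 \<and>
      ((a \<ge> 0 \<and> 0 < x \<and> x < 1 \<and> b > c \<and> c > 0) \<or>
       (a \<ge> 0 \<and> x < 0 \<and> c > 0 \<and> 0 > b) \<or>
       (a + 2 * \<delta> \<le> c \<and> 0 < x \<and> x < 1 \<and> c > 0 \<and> 0 > b) \<or>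
       (a + 2 * \<delta> \<le> c \<and> x < 0 \<and> b > c \<and> c > 0)) \<longrightarrow>
      hyp2f1 (a + \<delta>) b c x ^ 2 \<ge> hyp2f1 a b c x * hyp2f1 (a + 2 * \<delta>) b c x)
   \<and>
  \<comment> \<open>(c)\<close>
   (\<forall>a a' b c x \<delta> :: real.
      let R = (hyp2f1 (a' + \<delta>) b c x * hyp2f1 a b c x) /
              (hyp2f1 (a + \<delta>) b c x * hyp2f1 a' b c x);
          star = (Gamma (a + \<delta>) * Gamma a' / (Gamma a * Gamma (a' + \<delta>)) < R \<and> R < 1);
          starstar = (Gamma (c - a - \<delta>) * Gamma (c - a') / (Gamma (c - a) * Gamma (c - a' - \<delta>)) < R
                      \<and> R < 1)
      in \<delta> > 0 \<longrightarrow>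
         ((0 < x \<and> x < 1 \<and> b > c \<and> c > 0 \<and> a' > a \<and> a > 0 \<longrightarrow> star) \<and>
          (0 < x \<and> x < 1 \<and> c > 0 \<and> 0 > b \<and> c - \<delta> > a' \<and> a' > a \<longrightarrow> starstar) \<and>
          (x < 0 \<and> c > 0 \<and> 0 > b \<and> a' > a \<and> a > 0 \<longrightarrow> star) \<and>
          (x < 0 \<and> b > c \<and> c > 0 \<and> c - \<delta> > a' \<and> a' > a \<longrightarrow> starstar)))"

proof (intro conjI)
  show "\<forall>a a' b c \<delta> :: real. a' > a \<and> a \<ge> 0 \<and> b > c \<and> c > 0 \<and> \<delta> > 0 \<longrightarrow>
      (\<exists>d :: nat \<Rightarrow> real.
         (\<forall>x::real. \<bar>x\<bar> < 1 \<longrightarrow>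
            (\<lambda>n. d n * x ^ n) sums
              (hyp2f1 (a + \<delta>) b c x * hyp2f1 a' b c x - hyp2f1 (a' + \<delta>) b c x * hyp2f1 a b c x))
         \<and> d 0 = 0 \<and> d 1 = 0 \<and> (\<forall>n\<ge>2. d n > 0))"
  proof (intro allI impI)
    fix a a' b c \<delta> :: real
    assume H: "a' > a \<and> a \<ge> 0 \<and> b > c \<and> c > 0 \<and> \<delta> > 0"
    show "\<exists>d :: nat \<Rightarrow> real.
         (\<forall>x::real. \<bar>x\<bar> < 1 \<longrightarrow>
            (\<lambda>n. d n * x ^ n) sums
              (hyp2f1 (a + \<delta>) b c x * hyp2f1 a' b c x - hyp2f1 (a' + \<delta>) b c x * hyp2f1 a b c x))
         \<and> d 0 = 0 \<and> d 1 = 0 \<and> (\<forall>n\<ge>2. d n > 0)"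
    proof (intro exI[of _ "dco a a' b c \<delta>"] conjI allI impI)
      fix x :: real assume x: "\<bar>x\<bar> < 1"
      hence xm: "x > -1" by simp
      show "(\<lambda>n. dco a a' b c \<delta> n * x ^ n) sums
              (hyp2f1 (a + \<delta>) b c x * hyp2f1 a' b c x - hyp2f1 (a' + \<delta>) b c x * hyp2f1 a b c x)"
        unfolding hyp2f1_series[OF xm] using dco_sums[of c x a a' b \<delta>] H x by simp
    next
      show "dco a a' b c \<delta> 0 = 0" by (rule dco_0)
      show "dco a a' b c \<delta> 1 = 0" using H by (intro dco_1) simp
    next
      fix n :: nat assume n: "2 \<le> n"
      show "dco a a' b c \<delta> n > 0" unfolding dco_def
        by (rule partA) (use H n in simp_all)
    qed
  qed
next
  show "\<forall>a b c x \<delta> :: real. \<delta> > 0 \<and>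
      ((a \<ge> 0 \<and> 0 < x \<and> x < 1 \<and> b > c \<and> c > 0) \<or>
       (a \<ge> 0 \<and> x < 0 \<and> c > 0 \<and> 0 > b) \<or>
       (a + 2 * \<delta> \<le> c \<and> 0 < x \<and> x < 1 \<and> c > 0 \<and> 0 > b) \<or>
       (a + 2 * \<delta> \<le> c \<and> x < 0 \<and> b > c \<and> c > 0)) \<longrightarrow>
      hyp2f1 (a + \<delta>) b c x ^ 2 \<ge> hyp2f1 a b c x * hyp2f1 (a + 2 * \<delta>) b c x"
    using partB by blast
next
  show "\<forall>a a' b c x \<delta> :: real.
      let R = (hyp2f1 (a' + \<delta>) b c x * hyp2f1 a b c x) /
              (hyp2f1 (a + \<delta>) b c x * hyp2f1 a' b c x);
          star = (Gamma (a + \<delta>) * Gamma a' / (Gamma a * Gamma (a' + \<delta>)) < R \<and> R < 1);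
          starstar = (Gamma (c - a - \<delta>) * Gamma (c - a') / (Gamma (c - a) * Gamma (c - a' - \<delta>)) < R
                      \<and> R < 1)
      in \<delta> > 0 \<longrightarrow>
         ((0 < x \<and> x < 1 \<and> b > c \<and> c > 0 \<and> a' > a \<and> a > 0 \<longrightarrow> star) \<and>
          (0 < x \<and> x < 1 \<and> c > 0 \<and> 0 > b \<and> c - \<delta> > a' \<and> a' > a \<longrightarrow> starstar) \<and>
          (x < 0 \<and> c > 0 \<and> 0 > b \<and> a' > a \<and> a > 0 \<longrightarrow> star) \<and>
          (x < 0 \<and> b > c \<and> c > 0 \<and> c - \<delta> > a' \<and> a' > a \<longrightarrow> starstar))"
    unfolding Let_def
  proof (intro allI impI)
    fix a a' b c x \<delta> :: real
    assume d: "\<delta> > 0"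
    show "(0 < x \<and> x < 1 \<and> b > c \<and> c > 0 \<and> a' > a \<and> a > 0 \<longrightarrow>
          Gamma (a + \<delta>) * Gamma a' / (Gamma a * Gamma (a' + \<delta>)) <
            (hyp2f1 (a' + \<delta>) b c x * hyp2f1 a b c x) / (hyp2f1 (a + \<delta>) b c x * hyp2f1 a' b c x)
         \<and> (hyp2f1 (a' + \<delta>) b c x * hyp2f1 a b c x) / (hyp2f1 (a + \<delta>) b c x * hyp2f1 a' b c x) < 1) \<and>
          (0 < x \<and> x < 1 \<and> c > 0 \<and> 0 > b \<and> c - \<delta> > a' \<and> a' > a \<longrightarrow>
          Gamma (c - a - \<delta>) * Gamma (c - a') / (Gamma (c - a) * Gamma (c - a' - \<delta>)) <
            (hyp2f1 (a' + \<delta>) b c x * hyp2f1 a b c x) / (hyp2f1 (a + \<delta>) b c x * hyp2f1 a' b c x)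
         \<and> (hyp2f1 (a' + \<delta>) b c x * hyp2f1 a b c x) / (hyp2f1 (a + \<delta>) b c x * hyp2f1 a' b c x) < 1) \<and>
          (x < 0 \<and> c > 0 \<and> 0 > b \<and> a' > a \<and> a > 0 \<longrightarrow>
          Gamma (a + \<delta>) * Gamma a' / (Gamma a * Gamma (a' + \<delta>)) <
            (hyp2f1 (a' + \<delta>) b c x * hyp2f1 a b c x) / (hyp2f1 (a + \<delta>) b c x * hyp2f1 a' b c x)
         \<and> (hyp2f1 (a' + \<delta>) b c x * hyp2f1 a b c x) / (hyp2f1 (a + \<delta>) b c x * hyp2f1 a' b c x) < 1) \<and>
          (x < 0 \<and> b > c \<and> c > 0 \<and> c - \<delta> > a' \<and> a' > a \<longrightarrow>
          Gamma (c - a - \<delta>) * Gamma (c - a') / (Gamma (c - a) * Gamma (c - a' - \<delta>)) <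
            (hyp2f1 (a' + \<delta>) b c x * hyp2f1 a b c x) / (hyp2f1 (a + \<delta>) b c x * hyp2f1 a' b c x)
         \<and> (hyp2f1 (a' + \<delta>) b c x * hyp2f1 a b c x) / (hyp2f1 (a + \<delta>) b c x * hyp2f1 a' b c x) < 1)"
      using partC1[OF d] partC2[OF d] partC3[OF d] partC4[OF d]
      by blast
  qed
qed


end
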